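(* An ri function norm $R$ admits the representation \[ R(X)=\sup\left\{\int_0^1X^*(\omega)Y^*(\omega)\,d\omega:\ \mathbb{E}[Y]=R'(Y)=1,\ Y\in\mathcal{M}^+\right\}\quad\text{for all }X\in\mathcal{M}^+ \] if and only if $R$ is positive translation equivariant.
   Context: $\Omega=[0,1]$ with Lebesgue measure $\mu$, $\mathbb{E}[Y]=\int_0^1Y\,d\mu$; $\mathcal{M}^+$ is the set of measurable functions with values in $[0,\infty]$. A Banach function norm is $R:\mathcal{M}^+\to[0,\infty]$ with: $R(X)=0\iff X=0$, positive homogeneity, subadditivity; monotonicity; Fatou property ($0\le X_n\uparrow X$ a.e. $\Rightarrow R(X_n)\uparrow R(X)$); $R(\chi_E)<\infty$ and $\int_EX\,d\mu\le c_ER(X)$ for a constant $c_E$ depending only on $E,R$; normalised $R(\chi_\Omega)=1$. It is an ri function norm if $R(X)=R(Y)$ whenever $X,Y$ are equimeasurable ($\mu\{|X|>\lambda\}=\mu\{|Y|>\lambda\}$ for all $\lambda\ge0$). Decreasing rearrangement: $X^*(\omega)=\inf\{\lambda\ge0:\mu\{|X|>\lambda\}\le\omega\}$. Associate norm: $R'(X)=\sup\{\int_0^1X^*Y^*\,d\omega: R(Y)\le1,\ Y\in\mathcal{M}^+\}$. $R$ is positive translation equivariant if $R(X+c)=R(X)+c$ for all $X\in\mathcal{M}^+$, $c\in\mathbb{R}$ with $X+c\ge0$. *)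

theory Defs
  imports "HOL-Analysis.Analysis"
begin

definition Omega :: "real measure" where
  "Omega = lebesgue_on {0..1}"

definition Mplus :: "(real \<Rightarrow> ennreal) set" where
  "Mplus = borel_measurable Omega"

definition expect :: "(real \<Rightarrow> ennreal) \<Rightarrow> ennreal" where
  "expect Y = (\<integral>\<^sup>+ \<omega>. Y \<omega> \<partial>Omega)"

definition drearr :: "(real \<Rightarrow> ennreal) \<Rightarrow> real \<Rightarrow> ennreal" where
  "drearr X \<omega> = Inf {l :: ennreal. emeasure Omega {x \<in> space Omega. X x > l} \<le> ennreal \<omega>}"

definition equimeasurable :: "(real \<Rightarrow> ennreal) \<Rightarrow> (real \<Rightarrow> ennreal) \<Rightarrow> bool" where
  "equimeasurable X Y \<longleftrightarrow> (\<forall>l::ennreal.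
     emeasure Omega {x \<in> space Omega. X x > l} = emeasure Omega {x \<in> space Omega. Y x > l})"

definition banach_function_norm :: "((real \<Rightarrow> ennreal) \<Rightarrow> ennreal) \<Rightarrow> bool" where
  "banach_function_norm R \<longleftrightarrow>
     (\<forall>X\<in>Mplus. R X = 0 \<longleftrightarrow> (AE \<omega> in Omega. X \<omega> = 0)) \<and>
     (\<forall>X\<in>Mplus. \<forall>c::real. c \<ge> 0 \<longrightarrow> R (\<lambda>\<omega>. ennreal c * X \<omega>) = ennreal c * R X) \<and>
     (\<forall>X\<in>Mplus. \<forall>Y\<in>Mplus. R (\<lambda>\<omega>. X \<omega> + Y \<omega>) \<le> R X + R Y) \<and>
     (\<forall>X\<in>Mplus. \<forall>Y\<in>Mplus. (AE \<omega> in Omega. X \<omega> \<le> Y \<omega>) \<longrightarrow> R X \<le> R Y) \<and>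
     (\<forall>Xs X. (\<forall>n. Xs n \<in> Mplus) \<longrightarrow> X \<in> Mplus \<longrightarrow>
        (AE \<omega> in Omega. incseq (\<lambda>n. Xs n \<omega>) \<and> (\<lambda>n. Xs n \<omega>) \<longlonglongrightarrow> X \<omega>) \<longrightarrow>
        incseq (\<lambda>n. R (Xs n)) \<and> (\<lambda>n. R (Xs n)) \<longlonglongrightarrow> R X) \<and>
     (\<forall>E\<in>sets Omega. R (indicator E) < \<infinity> \<and>
        (\<exists>cE::real. \<forall>X\<in>Mplus. (\<integral>\<^sup>+ \<omega>\<in>E. X \<omega> \<partial>Omega) \<le> ennreal cE * R X)) \<and>
     R (indicator (space Omega)) = 1"

definition ri_function_norm :: "((real \<Rightarrow> ennreal) \<Rightarrow> ennreal) \<Rightarrow> bool" where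
  "ri_function_norm R \<longleftrightarrow> banach_function_norm R \<and>
     (\<forall>X\<in>Mplus. \<forall>Y\<in>Mplus. equimeasurable X Y \<longrightarrow> R X = R Y)"

definition assoc_norm :: "((real \<Rightarrow> ennreal) \<Rightarrow> ennreal) \<Rightarrow> (real \<Rightarrow> ennreal) \<Rightarrow> ennreal" where
  "assoc_norm R X = (SUP Y\<in>{Y\<in>Mplus. R Y \<le> 1}. \<integral>\<^sup>+ \<omega>. drearr X \<omega> * drearr Y \<omega> \<partial>Omega)"

text \<open>Positive translation equivariance: R(X + c) = R(X) + c whenever X + c >= 0.
  For c >= 0 this is stated directly; for c = -d < 0 (with X >= d) it is stated as
  R(X - d) + d = R(X).\<close>
definition pos_transl_equivariant :: "((real \<Rightarrow> ennreal) \<Rightarrow> ennreal) \<Rightarrow> bool" where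
  "pos_transl_equivariant R \<longleftrightarrow>
     (\<forall>X\<in>Mplus. \<forall>c::real. c \<ge> 0 \<longrightarrow> R (\<lambda>\<omega>. X \<omega> + ennreal c) = R X + ennreal c) \<and>
     (\<forall>X\<in>Mplus. \<forall>d::real. d > 0 \<longrightarrow> (\<forall>\<omega>\<in>space Omega. ennreal d \<le> X \<omega>) \<longrightarrow>
        R (\<lambda>\<omega>. X \<omega> - ennreal d) + ennreal d = R X)"

end

theory Submission
  imports Defs
begin

lemma space_Omega: "space Omega = {0..1}" by (simp add: Omega_def)
lemma sets_Omega: "sets Omega = sets (lebesgue_on {0..1})" by (simp add: Omega_def)

lemma emeasure_Omega: "A \<in> sets Omega \<Longrightarrow> emeasure Omega A = emeasure lebesgue (A \<inter> {0..1})"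
proof -
  assume "A \<in> sets Omega"
  then have "A \<subseteq> {0..1}" using sets.sets_into_space[of A Omega] by (simp add: space_Omega)
  then show ?thesis unfolding Omega_def
    by (simp add: emeasure_restrict_space Int_absorb2 space_Omega)
qed

lemma Ico_sets_Omega: "0 \<le> a \<Longrightarrow> b \<le> 1 \<Longrightarrow> {a..<b} \<in> sets Omega"
  unfolding Omega_def by (auto simp: sets_restrict_space_iff)

lemma emeasure_Omega_Ico: "0 \<le> a \<Longrightarrow> a \<le> b \<Longrightarrow> b \<le> 1 \<Longrightarrow> emeasure Omega {a..<b} = ennreal (b - a)"
proof -
  assume h: "0 \<le> a" "a \<le> b" "b \<le> 1"
  have "{a..<b} \<in> sets Omega" using h by (simp add: Ico_sets_Omega)
  then have "emeasure Omega {a..<b} = emeasure lebesgue {a..<b}" using h by (simp add: emeasure_Omega Int_absorb2 subset_iff)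
  also have "\<dots> = ennreal (b - a)" using h by simp
  finally show ?thesis .
qed

lemma emeasure_Omega_space: "emeasure Omega {0..1} = 1"
  unfolding Omega_def by (simp add: emeasure_restrict_space)

lemma fin_Omega: "finite_measure Omega"
  by (rule finite_measureI) (simp add: emeasure_Omega_space space_Omega)

lemma meas_id_Omega[measurable]: "(\<lambda>x. x) \<in> borel_measurable Omega"
  unfolding Omega_def using id_borel_measurable_lebesgue_on by (simp add: id_def)

lemma emeasure_Omega_le1: "emeasure Omega A \<le> 1"
proof -
  have "emeasure Omega A \<le> emeasure Omega (space Omega)"
    by (cases "A \<in> sets Omega") (auto intro!: emeasure_mono dest: sets.sets_into_space simp: emeasure_notin_sets)
  then show ?thesis by (simp add: emeasure_Omega_space space_Omega)
qed

definition Dist :: "(real \<Rightarrow> ennreal) \<Rightarrow> ennreal \<Rightarrow> ennreal" where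
  "Dist X l = emeasure Omega {x \<in> space Omega. l < X x}"

lemma Dist_sets: "X \<in> Mplus \<Longrightarrow> {x \<in> space Omega. l < X x} \<in> sets Omega"
  unfolding Mplus_def by measurable

lemma Dist_le1: "Dist X l \<le> 1"
  unfolding Dist_def by (rule emeasure_Omega_le1)

lemma Dist_antimono: "X \<in> Mplus \<Longrightarrow> l \<le> l' \<Longrightarrow> Dist X l' \<le> Dist X l"
  unfolding Dist_def by (rule emeasure_mono) (auto intro: Dist_sets)

lemma Dist_top: "Dist X top = 0"
  unfolding Dist_def by simp

lemma drearr_Dist: "drearr X \<omega> = Inf {l. Dist X l \<le> ennreal \<omega>}"
  unfolding drearr_def Dist_def by simp

lemma ennreal_gt_add_inverse:
  fixes l b :: ennreal
  assumes "l < b"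
  shows "\<exists>k::nat. l + ennreal (1 / Suc k) < b"
proof -
  have "l < top" using assms top.not_eq_extremum by fastforce
  then obtain a where a: "l = ennreal a" "a \<ge> 0" by (cases l) auto
  show ?thesis
  proof (cases "b = top")
    case True
    have "ennreal (a + 1 / Suc 0) < top" by simp
    then have "l + ennreal (1 / Suc 0) < b" using a True by (subst (asm) ennreal_plus) auto
    then show ?thesis by blast
  next
    case False
    then obtain c where c: "b = ennreal c" "c \<ge> 0" by (cases b) auto
    with assms a have "a < c" by (simp add: ennreal_less_iff)
    then obtain k where k: "inverse (real (Suc k)) < c - a"
      using reals_Archimedean[of "c - a"] by auto
    have "a + 1 / Suc k < c" using k by (simp add: field_simps)
    then have "ennreal (a + 1 / Suc k) < ennreal c" using a by (subst ennreal_less_iff) auto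
    then have "l + ennreal (1 / Suc k) < b" using a c by (subst (asm) ennreal_plus) auto
    then show ?thesis by blast
  qed
qed

lemma Dist_right_cont:
  assumes X: "X \<in> Mplus" and lt: "ennreal w < Dist X l"
  shows "\<exists>k::nat. ennreal w < Dist X (l + ennreal (1 / Suc k))"
proof -
  define A where "A k = {x \<in> space Omega. l + ennreal (1 / Suc k) < X x}" for k :: nat
  have A_sets: "range A \<subseteq> sets Omega" unfolding A_def using X by (auto intro: Dist_sets)
  have inc: "incseq A"
  proof (rule incseq_SucI)
    fix k
    have "ennreal (1 / Suc (Suc k)) \<le> ennreal (1 / Suc k)"
      by (intro ennreal_leI) (simp add: frac_le)
    then have "l + ennreal (1 / Suc (Suc k)) \<le> l + ennreal (1 / Suc k)"
      by (rule add_left_mono)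
    then show "A k \<subseteq> A (Suc k)" unfolding A_def
      using le_less_trans by blast
  qed
  have U: "(\<Union>k. A k) = {x \<in> space Omega. l < X x}"
  proof
    have "l \<le> l + ennreal (1 / Suc k)" for k by simp
    then show "(\<Union>k. A k) \<subseteq> {x \<in> space Omega. l < X x}" unfolding A_def
      using le_less_trans by blast
    show "{x \<in> space Omega. l < X x} \<subseteq> (\<Union>k. A k)"
      unfolding A_def using ennreal_gt_add_inverse by blast
  qed
  have "(SUP k. emeasure Omega (A k)) = emeasure Omega (\<Union>k. A k)"
    by (rule SUP_emeasure_incseq[OF A_sets inc])
  then have "ennreal w < (SUP k. emeasure Omega (A k))" using lt U by (simp add: Dist_def)
  then obtain k where "ennreal w < emeasure Omega (A k)" by (auto simp: less_SUP_iff)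
  then show ?thesis unfolding A_def Dist_def by blast
qed

lemma drearr_gt:
  assumes X: "X \<in> Mplus"
  shows "l < drearr X w \<longleftrightarrow> ennreal w < Dist X l"
proof
  assume "l < drearr X w"
  show "ennreal w < Dist X l"
  proof (rule ccontr)
    assume "\<not> ennreal w < Dist X l"
    then have "Dist X l \<le> ennreal w" by simp
    then have "drearr X w \<le> l" unfolding drearr_Dist by (auto intro: Inf_lower)
    with \<open>l < drearr X w\<close> show False by simp
  qed
next
  assume lt: "ennreal w < Dist X l"
  then have "l \<noteq> top" using Dist_top[of X] by auto
  obtain k :: nat where k: "ennreal w < Dist X (l + ennreal (1 / Suc k))"
    using Dist_right_cont[OF X lt] by blast
  let ?d = "ennreal (1 / Suc k)"
  have "l + ?d \<le> drearr X w" unfolding drearr_Dist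
  proof (rule Inf_greatest)
    fix l' assume "l' \<in> {l. Dist X l \<le> ennreal w}"
    then have l': "Dist X l' \<le> ennreal w" by simp
    show "l + ?d \<le> l'"
    proof (rule ccontr)
      assume "\<not> l + ?d \<le> l'"
      then have "Dist X (l + ?d) \<le> Dist X l'" using Dist_antimono[OF X] by simp
      with l' k show False by simp
    qed
  qed
  moreover have "l < l + ?d"
  proof -
    obtain a where a: "l = ennreal a" "a \<ge> 0" using \<open>l \<noteq> top\<close> by (cases l) auto
    have "a < a + 1 / Suc k" by simp
    then have "ennreal a < ennreal (a + 1 / Suc k)" using a by (simp add: ennreal_less_iff)
    then show ?thesis using a by (simp add: ennreal_plus)
  qed
  ultimately show "l < drearr X w" by (rule less_le_trans[rotated])
qed

lemma drearr_antimono: "w \<le> w' \<Longrightarrow> drearr X w' \<le> drearr X w"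
  unfolding drearr_Dist
  by (rule Inf_superset_mono) (auto intro: order_trans ennreal_leI)

lemma ennreal_eqI_less:
  fixes a b :: ennreal
  assumes "\<And>l. l < a \<longleftrightarrow> l < b"
  shows "a = b"
  using assms by (metis linorder_neqE order_less_irrefl)

lemma drearr_meas: assumes X: "X \<in> Mplus" shows "drearr X \<in> Mplus"
  unfolding Mplus_def
proof (rule borel_measurableI_greater)
  fix y
  have "{x \<in> space Omega. y < drearr X x} = {x \<in> space Omega. ennreal x < Dist X y}"
    using drearr_gt[OF X] by auto
  also have "\<dots> \<in> sets Omega" by measurable
  finally show "{x \<in> space Omega. y < drearr X x} \<in> sets Omega" .
qed

lemma Dist_drearr:
  assumes X: "X \<in> Mplus"
  shows "Dist (drearr X) l = Dist X l"
proof -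
  obtain t where t: "Dist X l = ennreal t" "0 \<le> t" "t \<le> 1"
    using Dist_le1[of X l] by (cases "Dist X l") (auto simp: top_unique)
  have "{x \<in> space Omega. l < drearr X x} = {0..<t}"
    using drearr_gt[OF X] t by (auto simp: ennreal_less_iff space_Omega)
  then have "Dist (drearr X) l = emeasure Omega {0..<t}" unfolding Dist_def by simp
  also have "\<dots> = ennreal t" using t by (simp add: emeasure_Omega_Ico)
  finally show ?thesis using t by simp
qed

lemma equimeasurable_Dist: "equimeasurable X Y \<longleftrightarrow> (\<forall>l. Dist X l = Dist Y l)"
  unfolding equimeasurable_def Dist_def by simp

lemma equi_drearr: "X \<in> Mplus \<Longrightarrow> equimeasurable X (drearr X)"
  unfolding equimeasurable_Dist by (simp add: Dist_drearr)

lemma drearr_equi: "equimeasurable X Y \<Longrightarrow> drearr X = drearr Y"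
  unfolding equimeasurable_Dist by (simp add: drearr_Dist[abs_def])

lemma drearr_drearr: "X \<in> Mplus \<Longrightarrow> drearr (drearr X) = drearr X"
  by (metis drearr_equi equi_drearr)


lemma equi_integral:
  assumes X: "X \<in> Mplus" and Y: "Y \<in> Mplus" and eq: "equimeasurable X Y"
  shows "(\<integral>\<^sup>+ x. X x \<partial>Omega) = (\<integral>\<^sup>+ x. Y x \<partial>Omega)"
proof -
  have Xm: "X \<in> Omega \<rightarrow>\<^sub>M borel" and Ym: "Y \<in> Omega \<rightarrow>\<^sub>M borel" using X Y by (auto simp: Mplus_def)
  let ?E = "insert UNIV (range greaterThan) :: ennreal set set"
  have sig: "sets (borel :: ennreal measure) = sigma_sets UNIV ?E"
  proof -
    have "sigma_sets UNIV (range greaterThan) = sigma_sets (UNIV :: ennreal set) ?E"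
      by (rule sigma_sets_eqI) (auto intro: sigma_sets.Basic sigma_sets_top)
    then show ?thesis by (metis borel_Ioi sets_measure_of subset_UNIV Pow_UNIV)
  qed
  have "distr Omega borel X = distr Omega borel Y"
  proof (rule measure_eqI_generator_eq[where E="?E" and \<Omega>=UNIV and A="\<lambda>_. UNIV"])
    show "Int_stable ?E"
    proof (unfold Int_stable_def, intro ballI)
      fix a b assume "a \<in> ?E" "b \<in> ?E"
      have "{x<..} \<inter> {y<..} = {max x y<..}" for x y :: ennreal by auto
      then show "a \<inter> b \<in> ?E" using \<open>a \<in> ?E\<close> \<open>b \<in> ?E\<close> by auto
    qed
    show "?E \<subseteq> Pow UNIV" by simp
    fix A assume "A \<in> ?E"
    then show "emeasure (distr Omega borel X) A = emeasure (distr Omega borel Y) A"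
    proof
      assume "A = UNIV" then show ?thesis using Xm Ym by (simp add: emeasure_distr)
    next
      assume "A \<in> range greaterThan"
      then obtain l where A: "A = {l<..}" by auto
      have "emeasure (distr Omega borel X) A = Dist X l"
        using Xm unfolding A Dist_def by (simp add: emeasure_distr vimage_def Int_def conj_commute)
      moreover have "emeasure (distr Omega borel Y) A = Dist Y l"
        using Ym unfolding A Dist_def by (simp add: emeasure_distr vimage_def Int_def conj_commute)
      ultimately show ?thesis using eq by (simp add: equimeasurable_Dist)
    qed
  next
    show "sets (distr Omega borel X) = sigma_sets UNIV ?E" using sig by simp
    show "sets (distr Omega borel Y) = sigma_sets UNIV ?E" using sig by simp
    show "range (\<lambda>_. UNIV) \<subseteq> ?E" by auto
    show "(\<Union>i::nat. UNIV) = (UNIV :: ennreal set)" by simp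
    show "\<And>i. emeasure (distr Omega borel X) UNIV \<noteq> \<infinity>" using Xm
      by (simp add: emeasure_distr space_Omega emeasure_Omega_space)
  qed
  then have "(\<integral>\<^sup>+ x. x \<partial>distr Omega borel X) = (\<integral>\<^sup>+ x. x \<partial>distr Omega borel Y)" by simp
  then show ?thesis using Xm Ym by (simp add: nn_integral_distr)
qed

lemma integral_drearr: "X \<in> Mplus \<Longrightarrow> (\<integral>\<^sup>+ x. drearr X x \<partial>Omega) = (\<integral>\<^sup>+ x. X x \<partial>Omega)"
  by (metis equi_integral drearr_meas equi_drearr)

lemma Mplus_add_const: "X \<in> Mplus \<Longrightarrow> (\<lambda>x. X x + c) \<in> Mplus"
  unfolding Mplus_def by simp

lemma Mplus_mult_const: "X \<in> Mplus \<Longrightarrow> (\<lambda>x. (c::ennreal) * X x) \<in> Mplus"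
  unfolding Mplus_def by simp

lemma drearr_add:
  assumes X: "X \<in> Mplus" and w: "0 \<le> w" "w < 1"
  shows "drearr (\<lambda>x. X x + ennreal c) w = drearr X w + ennreal c"
proof (rule ennreal_eqI_less)
  fix l
  have Xc: "(\<lambda>x. X x + ennreal c) \<in> Mplus" using X by (rule Mplus_add_const)
  show "l < drearr (\<lambda>x. X x + ennreal c) w \<longleftrightarrow> l < drearr X w + ennreal c"
  proof (cases "l < ennreal c")
    case True
    have "{x \<in> space Omega. l < X x + ennreal c} = space Omega"
      using True by (auto intro: less_le_trans)
    then have "Dist (\<lambda>x. X x + ennreal c) l = 1" unfolding Dist_def
      by (simp add: space_Omega emeasure_Omega_space)
    then have "l < drearr (\<lambda>x. X x + ennreal c) w" using drearr_gt[OF Xc] w by (simp add: ennreal_less_iff)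
    moreover have "l < drearr X w + ennreal c" using True by (auto intro: less_le_trans)
    ultimately show ?thesis by simp
  next
    case False
    then obtain l' where l: "l = ennreal c + l'"
      by (metis add_diff_inverse_ennreal not_less)
    have ct: "ennreal c \<noteq> \<infinity>" by simp
    have "{x \<in> space Omega. l < X x + ennreal c} = {x \<in> space Omega. l' < X x}"
      unfolding l by (simp add: add.commute[of "X _"] ennreal_add_left_cancel_less)
    then have "Dist (\<lambda>x. X x + ennreal c) l = Dist X l'" unfolding Dist_def by simp
    then have "l < drearr (\<lambda>x. X x + ennreal c) w \<longleftrightarrow> l' < drearr X w"
      using drearr_gt[OF Xc] drearr_gt[OF X] by simp
    also have "\<dots> \<longleftrightarrow> l < drearr X w + ennreal c"
      unfolding l by (simp add: add.commute[of "drearr X w"] ennreal_add_left_cancel_less)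
    finally show ?thesis .
  qed
qed

lemma ennreal_mult_less_cancel:
  fixes a b c :: ennreal
  assumes "0 < c" "c < top"
  shows "c * a < c * b \<longleftrightarrow> a < b"
  using assms by (metis ennreal_mult_strict_left_mono mult_left_mono not_le zero_le)

lemma drearr_mult:
  assumes X: "X \<in> Mplus" and c: "0 < c"
  shows "drearr (\<lambda>x. ennreal c * X x) w = ennreal c * drearr X w"
proof (rule ennreal_eqI_less)
  fix l
  have Xc: "(\<lambda>x. ennreal c * X x) \<in> Mplus" using X by (rule Mplus_mult_const)
  define l' where "l' = ennreal (1 / c) * l"
  have l: "l = ennreal c * l'" unfolding l'_def using c
    by (simp add: mult.assoc[symmetric] ennreal_mult[symmetric] del: ennreal_mult)
  have cc: "0 < ennreal c" "ennreal c < top" using c by auto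
  have "{x \<in> space Omega. l < ennreal c * X x} = {x \<in> space Omega. l' < X x}"
    unfolding l using ennreal_mult_less_cancel[OF cc] by simp
  then have "Dist (\<lambda>x. ennreal c * X x) l = Dist X l'" unfolding Dist_def by simp
  then have "l < drearr (\<lambda>x. ennreal c * X x) w \<longleftrightarrow> l' < drearr X w"
    using drearr_gt[OF Xc] drearr_gt[OF X] by simp
  also have "\<dots> \<longleftrightarrow> l < ennreal c * drearr X w"
    unfolding l using ennreal_mult_less_cancel[OF cc] by simp
  finally show "l < drearr (\<lambda>x. ennreal c * X x) w \<longleftrightarrow> l < ennreal c * drearr X w" .
qed

lemma drearr_AE_zero:
  assumes X: "X \<in> Mplus" and ae: "AE x in Omega. X x = 0" and w: "0 \<le> w"
  shows "drearr X w = 0"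
proof -
  have "Dist X l = 0" for l
  proof -
    have Xm[measurable]: "X \<in> borel_measurable Omega" using X by (simp add: Mplus_def)
    have meas: "{x \<in> space Omega. X x \<noteq> 0} \<in> sets Omega" by measurable
    have "emeasure Omega {x \<in> space Omega. X x \<noteq> 0} = 0"
      using AE_iff_measurable[OF meas, of "\<lambda>x. X x = 0"] ae by simp
    then have "{x \<in> space Omega. X x \<noteq> 0} \<in> null_sets Omega" using meas by (simp add: null_sets_def)
    moreover have "{x \<in> space Omega. l < X x} \<subseteq> {x \<in> space Omega. X x \<noteq> 0}" by auto
    ultimately show ?thesis unfolding Dist_def using Dist_sets[OF X]
      by (meson null_sets_subset null_setsD1)
  qed
  then have "\<not> 0 < drearr X w" using drearr_gt[OF X] by simp
  then show ?thesis by simp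
qed


definition I :: "nat \<Rightarrow> nat \<Rightarrow> real set" where
  "I N k = {real k / real N ..< real (Suc k) / real N}"

definition step :: "nat \<Rightarrow> (nat \<Rightarrow> real) \<Rightarrow> real \<Rightarrow> ennreal" where
  "step N c x = (\<Sum>k<N. ennreal (c k) * indicator (I N k) x)"

lemma I_sub: "k < N \<Longrightarrow> I N k \<subseteq> {0..<1}"
  unfolding I_def by (auto simp: field_simps)

lemma I_sets: "k < N \<Longrightarrow> I N k \<in> sets Omega"
  unfolding I_def by (rule Ico_sets_Omega) (auto simp: field_simps)

lemma I_disj: "0 < N \<Longrightarrow> x \<in> I N j \<Longrightarrow> x \<in> I N k \<Longrightarrow> j = k"
proof -
  assume N: "0 < N" and j: "x \<in> I N j" and k: "x \<in> I N k"
  have "real j \<le> x * N" "x * N < real j + 1" "real k \<le> x * N" "x * N < real k + 1"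
    using j k N unfolding I_def by (auto simp: field_simps)
  then show "j = k" by linarith
qed

lemma I_cover:
  assumes N: "0 < N" and x: "0 \<le> x" "x < 1"
  shows "nat \<lfloor>x * N\<rfloor> < N" "x \<in> I N (nat \<lfloor>x * N\<rfloor>)"
proof -
  have "0 \<le> x * N" "x * N < N" using x N by auto
  then have f: "0 \<le> \<lfloor>x * N\<rfloor>" "\<lfloor>x * N\<rfloor> < N" by (auto simp: floor_less_iff)
  then show "nat \<lfloor>x * N\<rfloor> < N" by linarith
  have "real (nat \<lfloor>x * N\<rfloor>) \<le> x * N" "x * N < real (nat \<lfloor>x * N\<rfloor>) + 1"
    using f by linarith+
  then show "x \<in> I N (nat \<lfloor>x * N\<rfloor>)" unfolding I_def using N by (auto simp: field_simps)
qed

lemma emeasure_I: "k < N \<Longrightarrow> emeasure Omega (I N k) = ennreal (1 / N)"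
  unfolding I_def by (subst emeasure_Omega_Ico) (auto simp: field_simps diff_divide_distrib[symmetric])

lemma step_val: "0 < N \<Longrightarrow> j < N \<Longrightarrow> x \<in> I N j \<Longrightarrow> step N c x = ennreal (c j)"
proof -
  assume N: "0 < N" and j: "j < N" "x \<in> I N j"
  have "step N c x = (\<Sum>k\<in>{j}. ennreal (c k) * indicator (I N k) x)"
    unfolding step_def
    by (rule sum.mono_neutral_right) (use j I_disj[OF N] in \<open>auto simp: indicator_def\<close>)
  then show ?thesis using j by simp
qed

lemma step_out: "\<not> (0 \<le> x \<and> x < 1) \<Longrightarrow> step N c x = 0"
proof -
  assume x: "\<not> (0 \<le> x \<and> x < 1)"
  have "x \<notin> I N k" if "k < N" for k using I_sub[OF that] x by auto
  then show ?thesis unfolding step_def by (auto intro!: sum.neutral simp: indicator_def)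
qed

lemma step_meas: "step N c \<in> Mplus"
  unfolding step_def Mplus_def
  by (intro borel_measurable_sum borel_measurable_times_ennreal) (auto intro: borel_measurable_indicator I_sets)

lemma step_at: "0 < N \<Longrightarrow> 0 \<le> x \<Longrightarrow> x < 1 \<Longrightarrow> step N c x = ennreal (c (nat \<lfloor>x * N\<rfloor>))"
  using step_val I_cover by blast

lemma Dist_step:
  assumes N: "0 < N"
  shows "Dist (step N c) l = ennreal (card {k. k < N \<and> l < ennreal (c k)} / N)"
proof -
  let ?K = "{k. k < N \<and> l < ennreal (c k)}"
  have eq: "{x \<in> space Omega. l < step N c x} = (\<Union>k\<in>?K. I N k)"
  proof (intro set_eqI iffI)
    fix x assume x: "x \<in> {x \<in> space Omega. l < step N c x}"
    then have "0 \<le> x \<and> x < 1" using step_out[of x N c] by (cases "0 \<le> x \<and> x < 1") auto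
    then show "x \<in> (\<Union>k\<in>?K. I N k)" using x I_cover[OF N] step_at[OF N] by auto
  next
    fix x assume "x \<in> (\<Union>k\<in>?K. I N k)"
    then obtain k where k: "k < N" "l < ennreal (c k)" "x \<in> I N k" by auto
    then show "x \<in> {x \<in> space Omega. l < step N c x}"
      using step_val[OF N k(1,3)] I_sub[OF k(1)] by (auto simp: space_Omega)
  qed
  have "emeasure Omega (\<Union>k\<in>?K. I N k) = (\<Sum>k\<in>?K. emeasure Omega (I N k))"
    by (rule sum_emeasure[symmetric]) (auto intro: I_sets simp: disjoint_family_on_def dest: I_disj[OF N])
  also have "\<dots> = (\<Sum>k\<in>?K. ennreal (1 / N))" by (rule sum.cong) (auto simp: emeasure_I)
  also have "\<dots> = ennreal (card ?K / N)" by (simp add: ennreal_of_nat_eq_real_of_nat ennreal_mult[symmetric])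
  finally show ?thesis unfolding Dist_def eq .
qed

lemma step_perm:
  assumes N: "0 < N" and s: "bij_betw s {..<N} {..<N}"
  shows "equimeasurable (step N (\<lambda>k. c (s k))) (step N c)"
  unfolding equimeasurable_Dist
proof
  fix l
  let ?A = "{k. k < N \<and> l < ennreal (c (s k))}" and ?B = "{k. k < N \<and> l < ennreal (c k)}"
  have "bij_betw s ?A ?B"
  proof -
    have "?A \<subseteq> {..<N}" by auto
    then have "bij_betw s ?A (s ` ?A)" using s bij_betw_subset by blast
    moreover have "s ` ?A = ?B"
    proof
      show "s ` ?A \<subseteq> ?B" using s by (auto simp: bij_betw_def)
      show "?B \<subseteq> s ` ?A"
      proof
        fix k assume k: "k \<in> ?B"
        then have "k \<in> s ` {..<N}" using bij_betw_imp_surj_on[OF s] by auto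
        then obtain j where "j < N" "s j = k" by auto
        then show "k \<in> s ` ?A" using k by auto
      qed
    qed
    ultimately show ?thesis by simp
  qed
  then have "card ?A = card ?B" by (rule bij_betw_same_card)
  then show "Dist (step N (\<lambda>k. c (s k))) l = Dist (step N c) l" by (simp add: Dist_step[OF N])
qed

lemma integral_step_mult:
  assumes F: "F \<in> borel_measurable Omega"
  shows "(\<integral>\<^sup>+ x. step N c x * F x \<partial>Omega) = (\<Sum>k<N. ennreal (c k) * (\<integral>\<^sup>+ x. F x * indicator (I N k) x \<partial>Omega))"
proof -
  have "(\<integral>\<^sup>+ x. step N c x * F x \<partial>Omega) = (\<integral>\<^sup>+ x. (\<Sum>k<N. ennreal (c k) * (F x * indicator (I N k) x)) \<partial>Omega)"
  proof (rule nn_integral_cong)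
    fix x
    show "step N c x * F x = (\<Sum>k<N. ennreal (c k) * (F x * indicator (I N k) x))"
      unfolding step_def sum_distrib_right by (rule sum.cong) (simp_all only: mult_ac)
  qed
  also have "\<dots> = (\<Sum>k<N. \<integral>\<^sup>+ x. ennreal (c k) * (F x * indicator (I N k) x) \<partial>Omega)"
    using F by (intro nn_integral_sum) (auto intro!: borel_measurable_times_ennreal borel_measurable_indicator I_sets)
  also have "\<dots> = (\<Sum>k<N. ennreal (c k) * (\<integral>\<^sup>+ x. F x * indicator (I N k) x \<partial>Omega))"
    using F by (intro sum.cong refl nn_integral_cmult) (auto intro!: borel_measurable_times_ennreal borel_measurable_indicator I_sets)
  finally show ?thesis .
qed

lemma integral_I: "k < N \<Longrightarrow> (\<integral>\<^sup>+ x. indicator (I N k) x \<partial>Omega) = ennreal (1 / N)"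
  by (simp add: I_sets emeasure_I)

lemma integral_step:
  "0 < N \<Longrightarrow> (\<integral>\<^sup>+ x. step N c x \<partial>Omega) = (\<Sum>k<N. ennreal (c k)) * ennreal (1 / N)"
proof -
  assume N: "0 < N"
  have "(\<integral>\<^sup>+ x. step N c x \<partial>Omega) = (\<integral>\<^sup>+ x. step N c x * 1 \<partial>Omega)" by simp
  also have "\<dots> = (\<Sum>k<N. ennreal (c k) * ennreal (1 / N))"
    by (subst integral_step_mult) (auto simp: integral_I)
  also have "\<dots> = (\<Sum>k<N. ennreal (c k)) * ennreal (1 / N)" by (simp add: sum_distrib_right)
  finally show ?thesis .
qed

lemma drearr_step_decr:
  assumes N: "0 < N" and dec: "\<And>i j. i \<le> j \<Longrightarrow> j < N \<Longrightarrow> c j \<le> c i"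
    and w: "0 \<le> w" "w < 1"
  shows "drearr (step N c) w = step N c w"
proof (rule ennreal_eqI_less)
  fix l
  let ?K = "{k. k < N \<and> l < ennreal (c k)}"
  define j where "j = nat \<lfloor>w * N\<rfloor>"
  have j: "j < N" "w \<in> I N j" using I_cover[OF N w] unfolding j_def by auto
  have sv: "step N c w = ennreal (c j)" using step_val[OF N j(1,2)] .
  have fin: "finite ?K" by simp
  have "l < ennreal (c j) \<longleftrightarrow> j < card ?K"
  proof
    assume lj: "l < ennreal (c j)"
    have "{..j} \<subseteq> ?K"
    proof
      fix i assume "i \<in> {..j}"
      then have "i \<le> j" by simp
      then have "ennreal (c j) \<le> ennreal (c i)" using dec j(1) by (simp add: ennreal_leI)
      then show "i \<in> ?K" using lj \<open>i \<le> j\<close> j(1) by auto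
    qed
    then have "card {..j} \<le> card ?K" using fin by (rule card_mono[rotated])
    then show "j < card ?K" by simp
  next
    assume jc: "j < card ?K"
    show "l < ennreal (c j)"
    proof (rule ccontr)
      assume "\<not> l < ennreal (c j)"
      then have "?K \<subseteq> {..<j}"
      proof (intro subsetI)
        fix k assume k: "k \<in> ?K" "\<not> l < ennreal (c j)"
        show "k \<in> {..<j}"
        proof (rule ccontr)
          assume "k \<notin> {..<j}"
          then have "j \<le> k" by simp
          then have "ennreal (c k) \<le> ennreal (c j)" using dec k by (simp add: ennreal_leI)
          then show False using k by auto
        qed
      qed
      then have "card ?K \<le> j" using card_mono[of "{..<j}" ?K] by simp
      then show False using jc by simp
    qed
  qed
  also have "\<dots> \<longleftrightarrow> w < card ?K / N"
    using j(2) N unfolding I_def by (auto simp: field_simps)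
  also have "\<dots> \<longleftrightarrow> ennreal w < Dist (step N c) l"
    using w by (simp add: Dist_step[OF N] ennreal_less_iff)
  also have "\<dots> \<longleftrightarrow> l < drearr (step N c) w"
    using drearr_gt[OF step_meas] by simp
  finally show "l < drearr (step N c) w \<longleftrightarrow> l < step N c w" using sv by simp
qed


lemma AE_lt1: "AE x in Omega. x < 1"
proof -
  have meas: "{x \<in> space Omega. \<not> x < 1} \<in> sets Omega" by measurable
  have "{x \<in> space Omega. \<not> x < 1} = {1}" by (auto simp: space_Omega)
  then have "emeasure Omega {x \<in> space Omega. \<not> x < 1} = 0"
    using meas by (simp add: emeasure_Omega)
  then show ?thesis using AE_iff_measurable[OF meas] by simp
qed

lemma AE_space: "AE x in Omega. 0 \<le> x \<and> x \<le> 1"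
  by (rule AE_I2) (simp add: space_Omega)

lemma ind_space_meas: "indicator (space Omega) \<in> Mplus"
  unfolding Mplus_def by simp

lemma drearr_ind_space:
  assumes w: "0 \<le> w" "w < 1"
  shows "drearr (indicator (space Omega)) w = 1"
proof (rule ennreal_eqI_less)
  fix l :: ennreal
  have "Dist (indicator (space Omega)) l = (if l < 1 then 1 else 0)"
  proof (cases "l < 1")
    case True
    then have e: "{x \<in> space Omega. l < indicator (space Omega) x} = space Omega" by auto
    show ?thesis using True unfolding Dist_def e by (simp add: space_Omega emeasure_Omega_space)
  next
    case False
    then have e: "{x \<in> space Omega. l < indicator (space Omega) x} = {}" by (auto simp: indicator_def)
    show ?thesis using False unfolding Dist_def e by simp
  qed
  then show "l < drearr (indicator (space Omega)) w \<longleftrightarrow> l < 1"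
    using drearr_gt[OF ind_space_meas] w by (simp add: ennreal_less_iff)
qed

definition YS :: "((real \<Rightarrow> ennreal) \<Rightarrow> ennreal) \<Rightarrow> (real \<Rightarrow> ennreal) set" where
  "YS R = {Y\<in>Mplus. expect Y = 1 \<and> assoc_norm R Y = 1}"

locale rinorm =
  fixes R :: "(real \<Rightarrow> ennreal) \<Rightarrow> ennreal"
  assumes ri: "ri_function_norm R"
begin

lemma bfn: "banach_function_norm R" using ri by (simp add: ri_function_norm_def)

lemma R_zero_iff: "X \<in> Mplus \<Longrightarrow> R X = 0 \<longleftrightarrow> (AE x in Omega. X x = 0)"
  using bfn by (simp add: banach_function_norm_def)

lemma R_hom: "X \<in> Mplus \<Longrightarrow> 0 \<le> c \<Longrightarrow> R (\<lambda>x. ennreal c * X x) = ennreal c * R X"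
  using bfn by (simp add: banach_function_norm_def)

lemma R_subadd: "X \<in> Mplus \<Longrightarrow> Y \<in> Mplus \<Longrightarrow> R (\<lambda>x. X x + Y x) \<le> R X + R Y"
  using bfn by (simp add: banach_function_norm_def)

lemma R_mono: "X \<in> Mplus \<Longrightarrow> Y \<in> Mplus \<Longrightarrow> (AE x in Omega. X x \<le> Y x) \<Longrightarrow> R X \<le> R Y"
  using bfn by (simp add: banach_function_norm_def)

lemma R_cong: "X \<in> Mplus \<Longrightarrow> Y \<in> Mplus \<Longrightarrow> (AE x in Omega. X x = Y x) \<Longrightarrow> R X = R Y"
  by (rule antisym) (auto intro: R_mono elim: AE_mp)

lemma R_fatou:
  "(\<And>n. Xs n \<in> Mplus) \<Longrightarrow> X \<in> Mplus \<Longrightarrow>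
   (AE x in Omega. incseq (\<lambda>n. Xs n x) \<and> (\<lambda>n. Xs n x) \<longlonglongrightarrow> X x) \<Longrightarrow>
   incseq (\<lambda>n. R (Xs n)) \<and> (\<lambda>n. R (Xs n)) \<longlonglongrightarrow> R X"
  using bfn unfolding banach_function_norm_def by blast

lemma R_ind_fin: "E \<in> sets Omega \<Longrightarrow> R (indicator E) < \<infinity>"
  using bfn by (simp add: banach_function_norm_def)

lemma R_one: "R (indicator (space Omega)) = 1"
  using bfn by (simp add: banach_function_norm_def)

lemma R_ri: "X \<in> Mplus \<Longrightarrow> Y \<in> Mplus \<Longrightarrow> equimeasurable X Y \<Longrightarrow> R X = R Y"
  using ri by (simp add: ri_function_norm_def)

lemma R_drearr: "X \<in> Mplus \<Longrightarrow> R (drearr X) = R X"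
  by (metis R_ri drearr_meas equi_drearr)

lemma holder:
  assumes X: "X \<in> Mplus" and Y: "Y \<in> Mplus" and A: "assoc_norm R Y \<le> 1"
  shows "(\<integral>\<^sup>+ w. drearr X w * drearr Y w \<partial>Omega) \<le> R X"
proof (cases "R X = 0")
  case True
  then have ae: "AE x in Omega. X x = 0" using R_zero_iff[OF X] by simp
  have "(\<integral>\<^sup>+ w. drearr X w * drearr Y w \<partial>Omega) = (\<integral>\<^sup>+ w. 0 \<partial>Omega)"
    by (rule nn_integral_cong_AE) (use AE_space in \<open>eventually_elim, simp add: drearr_AE_zero[OF X ae]\<close>)
  then show ?thesis by simp
next
  case False
  show ?thesis
  proof (cases "R X = \<infinity>")
    case True then show ?thesis by simp
  next
    case False2: False
    obtain r where r: "R X = ennreal r" "0 < r" using False False2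
      by (cases "R X") (auto simp: ennreal_eq_0_iff)
    define Z where "Z = (\<lambda>x. ennreal (1 / r) * X x)"
    have Zm: "Z \<in> Mplus" unfolding Z_def using X by (rule Mplus_mult_const)
    have "R Z = ennreal (1 / r) * R X" unfolding Z_def using r by (intro R_hom X) simp
    also have "\<dots> = 1" using r by (simp add: ennreal_mult[symmetric] del: ennreal_mult)
    finally have RZ: "R Z \<le> 1" by simp
    have "(\<integral>\<^sup>+ w. drearr Y w * drearr Z w \<partial>Omega) \<le> assoc_norm R Y"
      unfolding assoc_norm_def using Zm RZ by (intro SUP_upper) auto
    also have "\<dots> \<le> 1" by (rule A)
    finally have le1: "(\<integral>\<^sup>+ w. drearr Y w * drearr Z w \<partial>Omega) \<le> 1" .
    have dZ: "drearr Z w = ennreal (1 / r) * drearr X w" for w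
      unfolding Z_def using r by (intro drearr_mult X) simp
    have meas: "(\<lambda>w. drearr X w * drearr Y w) \<in> borel_measurable Omega"
      using drearr_meas[OF X] drearr_meas[OF Y] unfolding Mplus_def by simp
    have "(\<integral>\<^sup>+ w. drearr Y w * drearr Z w \<partial>Omega) = ennreal (1 / r) * (\<integral>\<^sup>+ w. drearr X w * drearr Y w \<partial>Omega)"
      unfolding dZ using meas by (subst nn_integral_cmult[symmetric]) (auto simp: mult_ac)
    with le1 have "ennreal (1 / r) * (\<integral>\<^sup>+ w. drearr X w * drearr Y w \<partial>Omega) \<le> 1" by simp
    then have "ennreal r * (ennreal (1 / r) * (\<integral>\<^sup>+ w. drearr X w * drearr Y w \<partial>Omega)) \<le> ennreal r * 1"
      by (rule mult_left_mono) simp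
    then show ?thesis using r
      by (simp add: mult.assoc[symmetric] ennreal_mult[symmetric] del: ennreal_mult)
  qed
qed

lemma assoc_ge_int:
  assumes Y: "Y \<in> Mplus"
  shows "(\<integral>\<^sup>+ w. Y w \<partial>Omega) \<le> assoc_norm R Y"
proof -
  have "(\<integral>\<^sup>+ w. Y w \<partial>Omega) = (\<integral>\<^sup>+ w. drearr Y w \<partial>Omega)" using integral_drearr[OF Y] by simp
  also have "\<dots> = (\<integral>\<^sup>+ w. drearr Y w * drearr (indicator (space Omega)) w \<partial>Omega)"
    by (rule nn_integral_cong_AE) (use AE_lt1 AE_space in \<open>eventually_elim, simp add: drearr_ind_space\<close>)
  also have "\<dots> \<le> assoc_norm R Y"
    unfolding assoc_norm_def using ind_space_meas R_one by (intro SUP_upper) auto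
  finally show ?thesis .
qed

lemma YS_nonempty_if_rep:
  assumes rep: "\<forall>X\<in>Mplus. R X = (SUP Y\<in>YS R. \<integral>\<^sup>+ \<omega>. drearr X \<omega> * drearr Y \<omega> \<partial>Omega)"
  shows "YS R \<noteq> {}"
proof
  assume "YS R = {}"
  then have "R (indicator (space Omega)) = 0" using rep ind_space_meas by (simp add: bot_ennreal)
  then show False using R_one by simp
qed

lemma rep_add:
  assumes rep: "\<forall>X\<in>Mplus. R X = (SUP Y\<in>YS R. \<integral>\<^sup>+ \<omega>. drearr X \<omega> * drearr Y \<omega> \<partial>Omega)"
    and X: "X \<in> Mplus"
  shows "R (\<lambda>x. X x + ennreal c) = R X + ennreal c"
proof -
  have Xc: "(\<lambda>x. X x + ennreal c) \<in> Mplus" using X by (rule Mplus_add_const)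
  have "(\<integral>\<^sup>+ \<omega>. drearr (\<lambda>x. X x + ennreal c) \<omega> * drearr Y \<omega> \<partial>Omega)
        = (\<integral>\<^sup>+ \<omega>. drearr X \<omega> * drearr Y \<omega> \<partial>Omega) + ennreal c" if Y: "Y \<in> YS R" for Y
  proof -
    have Ym: "Y \<in> Mplus" and EY: "expect Y = 1" using Y by (auto simp: YS_def)
    have mX: "drearr X \<in> borel_measurable Omega" and mY: "drearr Y \<in> borel_measurable Omega"
      using drearr_meas[OF X] drearr_meas[OF Ym] by (auto simp: Mplus_def)
    have "(\<integral>\<^sup>+ \<omega>. drearr (\<lambda>x. X x + ennreal c) \<omega> * drearr Y \<omega> \<partial>Omega)
        = (\<integral>\<^sup>+ \<omega>. drearr X \<omega> * drearr Y \<omega> + ennreal c * drearr Y \<omega> \<partial>Omega)"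
      by (rule nn_integral_cong_AE)
        (use AE_lt1 AE_space in \<open>eventually_elim, simp add: drearr_add[OF X] distrib_right\<close>)
    also have "\<dots> = (\<integral>\<^sup>+ \<omega>. drearr X \<omega> * drearr Y \<omega> \<partial>Omega) + ennreal c * (\<integral>\<^sup>+ \<omega>. drearr Y \<omega> \<partial>Omega)"
      using mX mY by (simp add: nn_integral_add nn_integral_cmult)
    also have "(\<integral>\<^sup>+ \<omega>. drearr Y \<omega> \<partial>Omega) = 1"
      using integral_drearr[OF Ym] EY by (simp add: expect_def)
    finally show ?thesis by simp
  qed
  then have "R (\<lambda>x. X x + ennreal c) = (SUP Y\<in>YS R. (\<integral>\<^sup>+ \<omega>. drearr X \<omega> * drearr Y \<omega> \<partial>Omega) + ennreal c)"
    using rep Xc by simp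
  also have "\<dots> = R X + ennreal c"
    using ennreal_SUP_add_left[OF YS_nonempty_if_rep[OF rep]] rep X by simp
  finally show ?thesis .
qed

lemma rep_imp_pte:
  assumes rep: "\<forall>X\<in>Mplus. R X = (SUP Y\<in>YS R. \<integral>\<^sup>+ \<omega>. drearr X \<omega> * drearr Y \<omega> \<partial>Omega)"
  shows "pos_transl_equivariant R"
  unfolding pos_transl_equivariant_def
proof (intro conjI ballI allI impI)
  fix X :: "real \<Rightarrow> ennreal" and c :: real assume "X \<in> Mplus" "0 \<le> c"
  then show "R (\<lambda>\<omega>. X \<omega> + ennreal c) = R X + ennreal c" using rep_add[OF rep] by blast
next
  fix X :: "real \<Rightarrow> ennreal" and d :: real
  assume X: "X \<in> Mplus" and d: "0 < d" and ge: "\<forall>\<omega>\<in>space Omega. ennreal d \<le> X \<omega>"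
  have X': "(\<lambda>\<omega>. X \<omega> - ennreal d) \<in> Mplus" using X unfolding Mplus_def by simp
  have "R (\<lambda>\<omega>. X \<omega> - ennreal d) + ennreal d = R (\<lambda>x. X x - ennreal d + ennreal d)"
    using rep_add[OF rep X'] by simp
  also have "\<dots> = R X"
    by (rule R_cong) (use X' X ge in \<open>auto intro!: AE_I2 Mplus_add_const diff_add_cancel_ennreal\<close>)
  finally show "R (\<lambda>\<omega>. X \<omega> - ennreal d) + ennreal d = R X" .
qed

end


lemma sublin_zero:
  fixes p :: "(nat \<Rightarrow> real) \<Rightarrow> real"
  assumes hom: "\<And>t x. 0 < t \<Longrightarrow> p (\<lambda>k. t * x k) = t * p x"
  shows "p (\<lambda>k. 0) = 0"
  using hom[of 2 "\<lambda>k. 0"] by simp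

lemma hb_minorant:
  fixes p :: "(nat \<Rightarrow> real) \<Rightarrow> real"
  assumes sub: "\<And>x y. p (\<lambda>k. x k + y k) \<le> p x + p y"
    and hom: "\<And>t x. 0 < t \<Longrightarrow> p (\<lambda>k. t * x k) = t * p x"
  shows "\<exists>g. \<forall>x. (\<forall>k\<ge>N. x k = 0) \<longrightarrow> (\<Sum>k<N. g k * x k) \<le> p x"
proof -
  have p0: "p (\<lambda>k. 0) = 0" using hom[of 2 "\<lambda>k. 0"] by simp
  show ?thesis
proof (induction N)
  case 0
  have "x = (\<lambda>k. 0) \<Longrightarrow> 0 \<le> p x" for x using p0 by simp
  then show ?case by (auto intro!: exI[of _ "\<lambda>k. 0"] simp: fun_eq_iff)
next
  case (Suc N)
  then obtain g where g: "\<And>x. (\<forall>k\<ge>N. x k = 0) \<Longrightarrow> (\<Sum>k<N. g k * x k) \<le> p x" by blast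
  define e :: "nat \<Rightarrow> real" where "e = (\<lambda>k. if k = N then 1 else 0)"
  define M where "M = {m :: nat \<Rightarrow> real. \<forall>k\<ge>N. m k = 0}"
  define phi where "phi m = (\<Sum>k<N. g k * m k)" for m
  have phi_add: "phi (\<lambda>k. x k + y k) = phi x + phi y" for x y
    unfolding phi_def by (simp add: distrib_left sum.distrib)
  have phi_scale: "phi (\<lambda>k. t * x k) = t * phi x" for t x
    unfolding phi_def by (simp add: sum_distrib_left mult_ac)
  have phi_div: "phi (\<lambda>k. x k / t) = phi x / t" for t x
    unfolding phi_def by (simp add: sum_divide_distrib)
  have M_add: "m \<in> M \<Longrightarrow> m' \<in> M \<Longrightarrow> (\<lambda>k. m k + m' k) \<in> M" for m m' unfolding M_def by simp
  have M_scale: "m \<in> M \<Longrightarrow> (\<lambda>k. t * m k) \<in> M" for m t unfolding M_def by simp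
  have key: "phi m - p (\<lambda>k. m k - e k) \<le> p (\<lambda>k. m' k + e k) - phi m'"
    if m: "m \<in> M" and m': "m' \<in> M" for m m'
  proof -
    have "phi m + phi m' = phi (\<lambda>k. m k + m' k)" by (simp add: phi_add)
    also have "\<dots> \<le> p (\<lambda>k. m k + m' k)" unfolding phi_def using M_add[OF m m'] by (intro g) (simp add: M_def)
    also have "(\<lambda>k. m k + m' k) = (\<lambda>k. (m k - e k) + (m' k + e k))" by simp
    also have "p \<dots> \<le> p (\<lambda>k. m k - e k) + p (\<lambda>k. m' k + e k)" by (rule sub)
    finally show ?thesis by simp
  qed
  define A where "A = (\<lambda>m. phi m - p (\<lambda>k. m k - e k)) ` M"
  define \<alpha> where "\<alpha> = Sup A"
  have M0: "(\<lambda>k. 0) \<in> M" unfolding M_def by simp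
  have Ane: "A \<noteq> {}" unfolding A_def using M0 by blast
  have Abdd: "bdd_above A" unfolding A_def bdd_above_def using key[OF _ M0] by blast
  have al_ge: "phi m - p (\<lambda>k. m k - e k) \<le> \<alpha>" if "m \<in> M" for m
    unfolding \<alpha>_def using that Abdd by (intro cSup_upper) (auto simp: A_def)
  have al_le: "\<alpha> \<le> p (\<lambda>k. m' k + e k) - phi m'" if "m' \<in> M" for m'
    unfolding \<alpha>_def using Ane key[OF _ that] by (intro cSup_least) (auto simp: A_def)
  define g' where "g' = g(N := \<alpha>)"
  show ?case
  proof (intro exI[of _ g'] allI impI)
    fix x :: "nat \<Rightarrow> real" assume x: "\<forall>k\<ge>Suc N. x k = 0"
    define t where "t = x N"
    define m where "m = x(N := 0)"
    have mM: "m \<in> M" unfolding M_def m_def using x by (auto simp: Suc_le_eq)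
    have xe: "x = (\<lambda>k. m k + t * e k)" unfolding m_def t_def e_def by auto
    have lhs: "(\<Sum>k<Suc N. g' k * x k) = phi m + t * \<alpha>"
      unfolding phi_def g'_def m_def t_def by (simp add: mult.commute)
    consider "t = 0" | "0 < t" | "t < 0" by linarith
    then show "(\<Sum>k<Suc N. g' k * x k) \<le> p x"
    proof cases
      case 1
      then have "x = m" using xe by simp
      then show ?thesis using lhs 1 g[of m] mM by (simp add: phi_def M_def)
    next
      case 2
      let ?m = "\<lambda>k. (1 / t) * m k"
      have "\<alpha> \<le> p (\<lambda>k. ?m k + e k) - phi ?m" using al_le[OF M_scale[OF mM]] .
      then have "t * \<alpha> \<le> t * (p (\<lambda>k. ?m k + e k) - phi ?m)" using 2 by simp
      also have "\<dots> = p (\<lambda>k. t * (?m k + e k)) - phi m"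
        using 2 by (simp add: hom phi_scale phi_div right_diff_distrib)
      also have "(\<lambda>k. t * (?m k + e k)) = x" using 2 xe by (auto simp: fun_eq_iff field_simps)
      finally show ?thesis using lhs by simp
    next
      case 3
      define s where "s = - t"
      have s: "0 < s" using 3 by (simp add: s_def)
      let ?m = "\<lambda>k. (1 / s) * m k"
      have "phi ?m - p (\<lambda>k. ?m k - e k) \<le> \<alpha>" using al_ge[OF M_scale[OF mM]] .
      then have "s * (phi ?m - p (\<lambda>k. ?m k - e k)) \<le> s * \<alpha>" using s by simp
      moreover have "s * (phi ?m - p (\<lambda>k. ?m k - e k)) = phi m - p (\<lambda>k. s * (?m k - e k))"
      proof -
        have h: "p (\<lambda>k. s * (?m k - e k)) = s * p (\<lambda>k. ?m k - e k)" by (rule hom[OF s])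
        have h2: "s * phi ?m = phi m" using s phi_scale[of s ?m] by (simp add: fun_eq_iff)
        have "s * (phi ?m - p (\<lambda>k. ?m k - e k)) = s * phi ?m - s * p (\<lambda>k. ?m k - e k)"
          by (rule right_diff_distrib)
        then show ?thesis by (simp only: h h2)
      qed
      moreover have "(\<lambda>k. s * (?m k - e k)) = x" using s xe by (auto simp: fun_eq_iff field_simps s_def)
      ultimately show ?thesis using lhs by (simp add: s_def)
    qed
  qed
qed
qed

lemma hb_support:
  fixes p :: "(nat \<Rightarrow> real) \<Rightarrow> real"
  assumes sub: "\<And>x y. p (\<lambda>k. x k + y k) \<le> p x + p y"
    and hom: "\<And>t x. 0 < t \<Longrightarrow> p (\<lambda>k. t * x k) = t * p x"
    and a: "\<forall>k\<ge>N. a k = 0"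
  shows "\<exists>g. (\<forall>x. (\<forall>k\<ge>N. x k = 0) \<longrightarrow> (\<Sum>k<N. g k * x k) \<le> p x) \<and> (\<Sum>k<N. g k * a k) = p a"
proof -
  have p0: "p (\<lambda>k. 0) = 0" using hom[of 2 "\<lambda>k. 0"] by simp
  have homa: "p (\<lambda>k. t * a k) = t * p a" if "0 \<le> t" for t
    using that hom[of t a] p0 by (cases "t = 0") auto
  define S where "S x = (\<lambda>t. p (\<lambda>k. x k + t * a k) - t * p a) ` {0..}" for x
  define q where "q x = Inf (S x)" for x
  have Sne: "S x \<noteq> {}" for x unfolding S_def by auto
  have lowb: "- p (\<lambda>k. - x k) \<le> p (\<lambda>k. x k + t * a k) - t * p a" if "0 \<le> t" for x t
  proof -
    have "t * p a = p (\<lambda>k. (x k + t * a k) + (- x k))" using homa[OF that] by simp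
    also have "\<dots> \<le> p (\<lambda>k. x k + t * a k) + p (\<lambda>k. - x k)" by (rule sub)
    finally show ?thesis by simp
  qed
  have Sbdd: "bdd_below (S x)" for x unfolding S_def bdd_below_def using lowb by blast
  have q_le: "q x \<le> p (\<lambda>k. x k + t * a k) - t * p a" if "0 \<le> t" for x t
    unfolding q_def using Sbdd that by (intro cInf_lower) (auto simp: S_def)
  have q_ge: "c \<le> q x" if "\<And>t. 0 \<le> t \<Longrightarrow> c \<le> p (\<lambda>k. x k + t * a k) - t * p a" for c x
    unfolding q_def using Sne that by (intro cInf_greatest) (auto simp: S_def)
  have q_le_p: "q x \<le> p x" for x using q_le[of 0 x] by simp
  have q_sub: "q (\<lambda>k. x k + y k) \<le> q x + q y" for x y
  proof -
    have "q (\<lambda>k. x k + y k) - (p (\<lambda>k. y k + s * a k) - s * p a) \<le> q x" if s: "0 \<le> s" for s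
    proof (rule q_ge)
      fix t :: real assume t: "0 \<le> t"
      have "q (\<lambda>k. x k + y k) \<le> p (\<lambda>k. (x k + y k) + (t + s) * a k) - (t + s) * p a"
        using q_le[of "t + s"] s t by simp
      also have "(\<lambda>k. (x k + y k) + (t + s) * a k) = (\<lambda>k. (x k + t * a k) + (y k + s * a k))"
        by (auto simp: fun_eq_iff algebra_simps)
      also have "p \<dots> \<le> p (\<lambda>k. x k + t * a k) + p (\<lambda>k. y k + s * a k)" by (rule sub)
      finally show "q (\<lambda>k. x k + y k) - (p (\<lambda>k. y k + s * a k) - s * p a) \<le> p (\<lambda>k. x k + t * a k) - t * p a"
        by (simp add: algebra_simps)
    qed
    then have "q (\<lambda>k. x k + y k) - q x \<le> q y" by (intro q_ge) (simp add: algebra_simps)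
    then show ?thesis by simp
  qed
  have q_hom: "q (\<lambda>k. t * x k) = t * q x" if t: "0 < t" for t x
  proof (rule antisym)
    have "q (\<lambda>k. t * x k) / t \<le> q x"
    proof (rule q_ge)
      fix u :: real assume u: "0 \<le> u"
      have "q (\<lambda>k. t * x k) \<le> p (\<lambda>k. t * x k + (t * u) * a k) - (t * u) * p a"
        using q_le[of "t * u"] t u by simp
      also have "(\<lambda>k. t * x k + (t * u) * a k) = (\<lambda>k. t * (x k + u * a k))" by (auto simp: algebra_simps)
      also have "p \<dots> = t * p (\<lambda>k. x k + u * a k)" using hom t by simp
      finally show "q (\<lambda>k. t * x k) / t \<le> p (\<lambda>k. x k + u * a k) - u * p a"
        using t by (simp add: field_simps)
    qed
    then show "q (\<lambda>k. t * x k) \<le> t * q x" using t by (simp add: field_simps)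
  next
    show "t * q x \<le> q (\<lambda>k. t * x k)"
    proof (rule q_ge)
      fix s :: real assume s: "0 \<le> s"
      have "q x \<le> p (\<lambda>k. x k + (s / t) * a k) - (s / t) * p a" using q_le[of "s / t" x] s t by simp
      then have "t * q x \<le> t * (p (\<lambda>k. x k + (s / t) * a k) - (s / t) * p a)" using t by simp
      also have "\<dots> = p (\<lambda>k. t * (x k + (s / t) * a k)) - s * p a" using hom t by (simp add: right_diff_distrib)
      also have "(\<lambda>k. t * (x k + (s / t) * a k)) = (\<lambda>k. t * x k + s * a k)" using t by (auto simp: field_simps)
      finally show "t * q x \<le> p (\<lambda>k. t * x k + s * a k) - s * p a" .
    qed
  qed
  obtain g where g: "\<And>x. (\<forall>k\<ge>N. x k = 0) \<Longrightarrow> (\<Sum>k<N. g k * x k) \<le> q x"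
    using hb_minorant[of q N, OF q_sub q_hom] by blast
  have "(\<Sum>k<N. g k * (- a k)) \<le> q (\<lambda>k. - a k)" using g[of "\<lambda>k. - a k"] a by simp
  also have "\<dots> \<le> p (\<lambda>k. - a k + 1 * a k) - 1 * p a" by (rule q_le) simp
  also have "\<dots> = - p a" using p0 by simp
  finally have ge: "p a \<le> (\<Sum>k<N. g k * a k)" by (simp add: sum_negf)
  have le: "(\<Sum>k<N. g k * a k) \<le> p a" using g[OF a] q_le_p[of a] by simp
  show ?thesis using g q_le_p ge le by (intro exI[of _ g]) (auto intro: order_trans)
qed


lemma ennreal_add_le: "ennreal (a + b) \<le> ennreal a + ennreal b"
proof -
  have "ennreal (a + b) \<le> ennreal (max a 0 + max b 0)" by (rule ennreal_leI) simp
  also have "\<dots> = ennreal (max a 0) + ennreal (max b 0)" by (rule ennreal_plus) auto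
  also have "\<dots> = ennreal a + ennreal b" by (simp add: max_def ennreal_neg)
  finally show ?thesis .
qed

lemma Mplus_zero: "(\<lambda>x. 0) \<in> Mplus" unfolding Mplus_def by simp

lemma Mplus_sum: "(\<And>j. j \<in> J \<Longrightarrow> F j \<in> Mplus) \<Longrightarrow> (\<lambda>x. \<Sum>j\<in>J. F j x) \<in> Mplus"
  unfolding Mplus_def by (rule borel_measurable_sum) auto

lemma I_coarse:
  assumes N: "0 < N" and K: "0 < K" and x: "x \<in> I (N * K) i"
  shows "x \<in> I N (i div K)"
proof -
  have e: "i div K * K + i mod K = i" by (rule div_mult_mod_eq)
  have m: "i mod K < K" using K by simp
  have e': "real (i div K) * real K + real (i mod K) = real i"
    using e by (metis of_nat_add of_nat_mult)
  have m': "real (i mod K) + 1 \<le> real K" using m by linarith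
  have a: "real (i div K) * K \<le> real i" using e' by linarith
  have b: "real i + 1 \<le> (real (i div K) + 1) * K" using e' m' by (simp add: algebra_simps)
  have NK: "0 < real N" "0 < real K" using N K by auto
  from x have x1: "real i / (real N * real K) \<le> x" and x2: "x < (real i + 1) / (real N * real K)"
    unfolding I_def by (auto simp: add.commute)
  have "real (i div K) / N = real (i div K) * K / (real N * real K)" using NK by (simp add: field_simps)
  also have "\<dots> \<le> real i / (real N * real K)" using a NK by (intro divide_right_mono) auto
  finally have c1: "real (i div K) / N \<le> x" using x1 by linarith
  have "(real i + 1) / (real N * real K) \<le> (real (i div K) + 1) * K / (real N * real K)"
    using b NK by (intro divide_right_mono) auto
  also have "\<dots> = (real (i div K) + 1) / N" using NK by (simp add: field_simps)
  finally have c2: "x < (real (i div K) + 1) / N" using x2 by linarith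
  show ?thesis unfolding I_def using c1 c2 by (simp add: add.commute)
qed

lemma rot_inj:
  fixes j j' K r :: nat
  assumes "j < K" "j' < K" "(r + j) mod K = (r + j') mod K"
  shows "j = j'"
proof -
  have *: "j = j'" if "j \<le> j'" "j' < K" "(r + j) mod K = (r + j') mod K" for j j'
  proof -
    have "K dvd (r + j') - (r + j)" using mod_eq_dvd_iff_nat[of "r + j" "r + j'" K] that by simp
    then have d: "K dvd j' - j" by simp
    show "j = j'"
    proof (rule ccontr)
      assume "j \<noteq> j'"
      then have "0 < j' - j" using that by simp
      then have "K \<le> j' - j" using d by (rule dvd_imp_le[rotated])
      then show False using that by linarith
    qed
  qed
  show ?thesis using *[of j j'] *[of j' j] assms by (metis nle_le)
qed

lemma sum_rotate:
  assumes r: "r < (K::nat)"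
  shows "(\<Sum>j<K. f ((r + j) mod K)) = (\<Sum>j<K. f j)"
proof -
  have inj: "inj_on (\<lambda>j. (r + j) mod K) {..<K}"
  proof (rule inj_onI)
    fix j j' assume "j \<in> {..<K}" "j' \<in> {..<K}" "(r + j) mod K = (r + j') mod K"
    then show "j = j'" using rot_inj by auto
  qed
  have "(\<lambda>j. (r + j) mod K) ` {..<K} = {..<K}"
    using r by (intro endo_inj_surj inj) auto
  then have "bij_betw (\<lambda>j. (r + j) mod K) {..<K} {..<K}" using inj by (simp add: bij_betw_def)
  then show ?thesis by (rule sum.reindex_bij_betw)
qed

context rinorm begin

lemma R_zero_fun: "R (\<lambda>x. 0) = 0"
  using R_zero_iff[OF Mplus_zero] by simp

lemma R_sum:
  assumes "finite J" "\<And>j. j \<in> J \<Longrightarrow> F j \<in> Mplus"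
  shows "R (\<lambda>x. \<Sum>j\<in>J. F j x) \<le> (\<Sum>j\<in>J. R (F j))"
  using assms
proof (induction J rule: finite_induct)
  case empty then show ?case by (simp add: R_zero_fun)
next
  case (insert a J)
  have "R (\<lambda>x. \<Sum>j\<in>insert a J. F j x) = R (\<lambda>x. F a x + (\<Sum>j\<in>J. F j x))"
    using insert by simp
  also have "\<dots> \<le> R (F a) + R (\<lambda>x. \<Sum>j\<in>J. F j x)"
    using insert by (intro R_subadd Mplus_sum) auto
  also have "\<dots> \<le> R (F a) + (\<Sum>j\<in>J. R (F j))" using insert by (intro add_left_mono) auto
  finally show ?case using insert by simp
qed

lemma step_le_const:
  assumes N: "0 < N"
  shows "step N c x \<le> ennreal (\<Sum>k<N. max (c k) 0) * indicator (space Omega) x"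
proof (cases "0 \<le> x \<and> x < 1")
  case True
  then have "step N c x = ennreal (c (nat \<lfloor>x * N\<rfloor>))" using step_at[OF N] by auto
  also have "\<dots> \<le> ennreal (\<Sum>k<N. max (c k) 0)"
  proof (rule ennreal_leI)
    have "c (nat \<lfloor>x * N\<rfloor>) \<le> max (c (nat \<lfloor>x * N\<rfloor>)) 0" by simp
    also have "\<dots> \<le> (\<Sum>k<N. max (c k) 0)"
      using I_cover[OF N] True by (intro member_le_sum) auto
    finally show "c (nat \<lfloor>x * N\<rfloor>) \<le> (\<Sum>k<N. max (c k) 0)" .
  qed
  finally show ?thesis using True by (simp add: space_Omega)
next
  case False then show ?thesis by (simp add: step_out)
qed

lemma R_step_fin: "0 < N \<Longrightarrow> R (step N c) < \<infinity>"
proof -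
  assume N: "0 < N"
  let ?B = "\<Sum>k<N. max (c k) 0"
  have le: "AE x in Omega. step N c x \<le> ennreal ?B * indicator (space Omega) x"
    using step_le_const[OF N] by (intro AE_I2) blast
  have "R (step N c) \<le> R (\<lambda>x. ennreal ?B * indicator (space Omega) x)"
    by (rule R_mono[OF step_meas Mplus_mult_const[OF ind_space_meas] le])
  also have "\<dots> = ennreal ?B * R (indicator (space Omega))"
    by (rule R_hom[OF ind_space_meas]) (auto intro: sum_nonneg)
  finally have "R (step N c) \<le> ennreal ?B" using R_one by simp
  then show ?thesis using le_less_trans by fastforce
qed

definition pR :: "nat \<Rightarrow> (nat \<Rightarrow> real) \<Rightarrow> real" where
  "pR N c = enn2real (R (step N c))"

lemma R_step_eq: "0 < N \<Longrightarrow> R (step N c) = ennreal (pR N c)"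
  unfolding pR_def using R_step_fin by (simp add: less_top)

lemma pR_nonneg: "0 \<le> pR N c" unfolding pR_def by simp

lemma step_add_le: "step N (\<lambda>k. c k + d k) x \<le> step N c x + step N d x"
proof -
  have "step N (\<lambda>k. c k + d k) x \<le> (\<Sum>k<N. ennreal (c k) * indicator (I N k) x + ennreal (d k) * indicator (I N k) x)"
    unfolding step_def
    by (intro sum_mono) (metis distrib_right ennreal_add_le mult_right_mono zero_le)
  also have "\<dots> = step N c x + step N d x" unfolding step_def by (rule sum.distrib)
  finally show ?thesis .
qed

lemma pR_sub: "0 < N \<Longrightarrow> pR N (\<lambda>k. c k + d k) \<le> pR N c + pR N d"
proof -
  assume N: "0 < N"
  have "R (step N (\<lambda>k. c k + d k)) \<le> R (\<lambda>x. step N c x + step N d x)"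
    using step_meas[of N c] step_meas[of N d]
    by (intro R_mono step_meas AE_I2 step_add_le) (simp add: Mplus_def)
  also have "\<dots> \<le> R (step N c) + R (step N d)" by (intro R_subadd step_meas)
  finally have "ennreal (pR N (\<lambda>k. c k + d k)) \<le> ennreal (pR N c) + ennreal (pR N d)"
    by (simp add: R_step_eq[OF N])
  then show ?thesis by (simp add: pR_nonneg ennreal_plus[symmetric] del: ennreal_plus)
qed

lemma step_scale: "0 \<le> t \<Longrightarrow> step N (\<lambda>k. t * c k) x = ennreal t * step N c x"
  unfolding step_def sum_distrib_left by (intro sum.cong refl) (simp add: ennreal_mult' mult.assoc)

lemma pR_hom: "0 < N \<Longrightarrow> 0 < t \<Longrightarrow> pR N (\<lambda>k. t * c k) = t * pR N c"
proof -
  assume N: "0 < N" and t: "0 < t"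
  have "step N (\<lambda>k. t * c k) = (\<lambda>x. ennreal t * step N c x)"
    using t by (intro ext step_scale) simp
  then have "R (step N (\<lambda>k. t * c k)) = R (\<lambda>x. ennreal t * step N c x)" by simp
  also have "\<dots> = ennreal t * R (step N c)" using t by (intro R_hom step_meas) simp
  finally show ?thesis using t unfolding pR_def by (simp add: enn2real_mult)
qed

lemma step_mono: "(\<And>k. k < N \<Longrightarrow> c k \<le> d k) \<Longrightarrow> step N c x \<le> step N d x"
  unfolding step_def by (intro sum_mono mult_right_mono ennreal_leI) auto

lemma pR_mono: "0 < N \<Longrightarrow> (\<And>k. k < N \<Longrightarrow> c k \<le> d k) \<Longrightarrow> pR N c \<le> pR N d"
proof -
  assume N: "0 < N" and le: "\<And>k. k < N \<Longrightarrow> c k \<le> d k"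
  have "R (step N c) \<le> R (step N d)" using le by (intro R_mono step_meas AE_I2 step_mono) auto
  then show ?thesis using pR_nonneg[of N c] pR_nonneg[of N d] by (auto simp: R_step_eq[OF N] ennreal_le_iff2)
qed

lemma step_cong: "(\<And>k. k < N \<Longrightarrow> c k = d k) \<Longrightarrow> step N c = step N d"
  unfolding step_def by (intro ext sum.cong) auto

lemma pR_cong: "(\<And>k. k < N \<Longrightarrow> c k = d k) \<Longrightarrow> pR N c = pR N d"
  unfolding pR_def by (simp add: step_cong[of N c d])

lemma pR_perm: "0 < N \<Longrightarrow> bij_betw s {..<N} {..<N} \<Longrightarrow> pR N (\<lambda>k. c (s k)) = pR N c"
  unfolding pR_def using R_ri[OF step_meas step_meas step_perm] by simp

lemma FCA:
  assumes N: "0 < N" and K: "0 < K" and c: "\<And>i. 0 \<le> c i"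
  shows "R (step N (\<lambda>q. (\<Sum>r<K. c (q * K + r)) / K)) \<le> R (step (N * K) c)"
proof -
  define sh where "sh j i = (i div K) * K + (i mod K + j) mod K" for j i :: nat
  have NK: "0 < N * K" using N K by simp
  have bij: "bij_betw (sh j) {..<N * K} {..<N * K}" for j
  proof -
    have into: "sh j i < N * K" if "i < N * K" for i
    proof -
      have "i div K < N" using that by (simp add: less_mult_imp_div_less)
      then have "i div K * K + K \<le> N * K" by (metis Suc_leI add.commute mult_Suc mult_le_mono1)
      moreover have "(i mod K + j) mod K < K" using K by simp
      ultimately show ?thesis unfolding sh_def by linarith
    qed
    have inj: "inj_on (sh j) {..<N * K}"
    proof (rule inj_onI)
      fix i i' assume "i \<in> {..<N * K}" "i' \<in> {..<N * K}" and eq: "sh j i = sh j i'"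
      have m: "(i mod K + j) mod K < K" "(i' mod K + j) mod K < K" using K by auto
      have d: "sh j i div K = i div K" "sh j i' div K = i' div K"
        unfolding sh_def using m K by simp_all
      have md: "sh j i mod K = (i mod K + j) mod K" "sh j i' mod K = (i' mod K + j) mod K"
        unfolding sh_def using m by simp_all
      have q: "i div K = i' div K" using d eq by simp
      have "(i mod K + j) mod K = (i' mod K + j) mod K" using md eq by simp
      then have "i mod K = i' mod K"
        using rot_inj[of "i mod K" K "i' mod K" j] K by (simp add: add.commute)
      with q show "i = i'" by (metis div_mult_mod_eq)
    qed
    have "sh j ` {..<N * K} = {..<N * K}" using into by (intro endo_inj_surj inj) auto
    then show ?thesis using inj by (simp add: bij_betw_def)
  qed
  define \<beta> where "\<beta> q = (\<Sum>r<K. c (q * K + r)) / K" for q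
  have pt: "step N \<beta> x = (\<Sum>j<K. ennreal (1 / K) * step (N * K) (\<lambda>i. c (sh j i)) x)" for x
  proof (cases "0 \<le> x \<and> x < 1")
    case False then show ?thesis by (simp add: step_out)
  next
    case True
    define i where "i = nat \<lfloor>x * real (N * K)\<rfloor>"
    have i: "i < N * K" "x \<in> I (N * K) i" using I_cover[OF NK] True unfolding i_def by auto
    have q: "i div K < N" using i(1) by (simp add: less_mult_imp_div_less)
    have xq: "x \<in> I N (i div K)" using I_coarse[OF N K] i(2) by simp
    have "step N \<beta> x = ennreal (\<beta> (i div K))" using step_val[OF N q xq] .
    also have "\<beta> (i div K) = (1 / K) * (\<Sum>j<K. c (sh j i))"
    proof -
      have "(\<Sum>j<K. c (sh j i)) = (\<Sum>j<K. (\<lambda>r. c (i div K * K + r)) ((i mod K + j) mod K))"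
        unfolding sh_def by simp
      also have "\<dots> = (\<Sum>r<K. c (i div K * K + r))" using K by (intro sum_rotate) simp
      finally show ?thesis unfolding \<beta>_def by simp
    qed
    also have "ennreal ((1 / K) * (\<Sum>j<K. c (sh j i))) = (\<Sum>j<K. ennreal (1 / K) * ennreal (c (sh j i)))"
    proof -
      have "(\<Sum>j<K. ennreal (1 / K) * ennreal (c (sh j i))) = (\<Sum>j<K. ennreal ((1 / K) * c (sh j i)))"
        by (intro sum.cong refl) (rule ennreal_mult'[symmetric], simp)
      also have "\<dots> = ennreal (\<Sum>j<K. (1 / K) * c (sh j i))" using c by (intro sum_ennreal) simp
      also have "\<dots> = ennreal ((1 / K) * (\<Sum>j<K. c (sh j i)))" by (simp only: sum_distrib_left)
      finally show ?thesis by simp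
    qed
    also have "\<dots> = (\<Sum>j<K. ennreal (1 / K) * step (N * K) (\<lambda>i. c (sh j i)) x)"
      using step_val[OF NK i] by simp
    finally show ?thesis .
  qed
  have "R (step N \<beta>) = R (\<lambda>x. \<Sum>j<K. ennreal (1 / K) * step (N * K) (\<lambda>i. c (sh j i)) x)"
    using pt by presburger
  also have "\<dots> \<le> (\<Sum>j<K. R (\<lambda>x. ennreal (1 / K) * step (N * K) (\<lambda>i. c (sh j i)) x))"
    by (intro R_sum Mplus_mult_const step_meas) auto
  also have "\<dots> = (\<Sum>j<K. ennreal (1 / K) * R (step (N * K) c))"
  proof (rule sum.cong[OF refl])
    fix j
    have "R (\<lambda>x. ennreal (1 / K) * step (N * K) (\<lambda>i. c (sh j i)) x) = ennreal (1 / K) * R (step (N * K) (\<lambda>i. c (sh j i)))"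
      by (intro R_hom step_meas) simp
    also have "R (step (N * K) (\<lambda>i. c (sh j i))) = R (step (N * K) c)"
      using R_ri[OF step_meas step_meas step_perm[OF NK bij]] by simp
    finally show "R (\<lambda>x. ennreal (1 / K) * step (N * K) (\<lambda>i. c (sh j i)) x) = ennreal (1 / K) * R (step (N * K) c)" .
  qed
  also have "\<dots> = (of_nat K * ennreal (1 / K)) * R (step (N * K) c)"
    by (simp add: mult.assoc)
  also have "of_nat K * ennreal (1 / K) = 1"
    using K by (simp add: ennreal_of_nat_eq_real_of_nat ennreal_mult[symmetric] del: ennreal_mult)
  finally show ?thesis unfolding \<beta>_def by simp
qed

end


definition rr :: "nat \<Rightarrow> real \<Rightarrow> real" where
  "rr m x = (real (nat \<lfloor>x * 2 ^ m\<rfloor>) + 1) / 2 ^ m"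

definition apc :: "nat \<Rightarrow> (real \<Rightarrow> ennreal) \<Rightarrow> nat \<Rightarrow> real" where
  "apc m W i = enn2real (min (of_nat m) (W ((real i + 1) / 2 ^ m)))"

definition approx :: "nat \<Rightarrow> (real \<Rightarrow> ennreal) \<Rightarrow> real \<Rightarrow> ennreal" where
  "approx m W = step (2 ^ m) (apc m W)"

lemma rr_floor: "0 \<le> x \<Longrightarrow> real (nat \<lfloor>x * 2 ^ m\<rfloor>) = of_int \<lfloor>x * 2 ^ m\<rfloor>"
  by simp

lemma rr_gt: "0 \<le> x \<Longrightarrow> x < rr m x"
proof -
  assume x: "0 \<le> x"
  have "x * 2 ^ m < of_int \<lfloor>x * 2 ^ m\<rfloor> + 1" by linarith
  then show ?thesis unfolding rr_def using rr_floor[OF x] by (simp add: field_simps)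
qed

lemma rr_le: "0 \<le> x \<Longrightarrow> rr m x \<le> x + 1 / 2 ^ m"
proof -
  assume x: "0 \<le> x"
  have "of_int \<lfloor>x * 2 ^ m\<rfloor> \<le> x * 2 ^ m" by linarith
  then show ?thesis unfolding rr_def using rr_floor[OF x] by (simp add: field_simps)
qed

lemma rr_mono: "0 \<le> x \<Longrightarrow> rr (Suc m) x \<le> rr m x"
proof -
  assume x: "0 \<le> x"
  define y where "y = x * 2 ^ m"
  have y: "0 \<le> y" using x by (simp add: y_def)
  have "2 * y < 2 * of_int \<lfloor>y\<rfloor> + 2" by linarith
  then have "\<lfloor>2 * y\<rfloor> < 2 * \<lfloor>y\<rfloor> + 2" by linarith
  then have f0: "\<lfloor>2 * y\<rfloor> + 1 \<le> 2 * \<lfloor>y\<rfloor> + 2" by linarith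
  then have "real_of_int (\<lfloor>2 * y\<rfloor> + 1) \<le> real_of_int (2 * \<lfloor>y\<rfloor> + 2)" by (simp only: of_int_le_iff)
  then have f: "of_int \<lfloor>2 * y\<rfloor> + 1 \<le> 2 * (of_int \<lfloor>y\<rfloor> + (1::real))" by simp
  have e: "x * 2 ^ Suc m = 2 * y" by (simp add: y_def)
  have e2: "(2::real) ^ Suc m = 2 * 2 ^ m" by simp
  have "rr (Suc m) x = (of_int \<lfloor>2 * y\<rfloor> + 1) / (2 * 2 ^ m)"
  proof -
    have e3: "x * (2 * 2 ^ m) = 2 * y" by (simp add: y_def)
    have "0 \<le> \<lfloor>2 * y\<rfloor>" using y by simp
    then show ?thesis unfolding rr_def using x by (simp add: e3)
  qed
  also have "\<dots> \<le> 2 * (of_int \<lfloor>y\<rfloor> + 1) / (2 * 2 ^ m)" using f by (intro divide_right_mono) auto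
  also have "\<dots> = rr m x" unfolding rr_def using x by (simp add: y_def field_simps)
  finally show ?thesis .
qed

lemma enn_min_nat: "ennreal (enn2real (min (of_nat m) w)) = min (of_nat m) w"
  by (rule ennreal_enn2real) (rule le_less_trans[OF min.cobounded1 of_nat_less_top])

lemma approx_val:
  assumes x: "0 \<le> x" "x < 1"
  shows "approx m W x = min (of_nat m) (W (rr m x))"
proof -
  have "approx m W x = ennreal (apc m W (nat \<lfloor>x * real (2 ^ m)\<rfloor>))"
    unfolding approx_def by (rule step_at) (use x in auto)
  also have "\<dots> = min (of_nat m) (W (rr m x))"
    unfolding apc_def rr_def enn_min_nat by simp
  finally show ?thesis .
qed

lemma approx_out: "\<not> (0 \<le> x \<and> x < 1) \<Longrightarrow> approx m W x = 0"
  unfolding approx_def by (rule step_out)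

lemma approx_meas: "approx m W \<in> Mplus"
  unfolding approx_def by (rule step_meas)

lemma approx_inc:
  assumes W: "\<And>a b. a \<le> b \<Longrightarrow> W b \<le> W a"
  shows "approx m W x \<le> approx (Suc m) W x"
proof (cases "0 \<le> x \<and> x < 1")
  case True
  have "W (rr m x) \<le> W (rr (Suc m) x)" using rr_mono True by (intro W) auto
  moreover have "(of_nat m :: ennreal) \<le> of_nat (Suc m)" by simp
  ultimately have "min (of_nat m) (W (rr m x)) \<le> min (of_nat (Suc m)) (W (rr (Suc m) x))"
    by (rule min.mono[rotated])
  then show ?thesis using True by (simp only: approx_val)
next
  case False then show ?thesis by (simp add: approx_out)
qed

lemma approx_sup:
  assumes Z: "Z \<in> Mplus" and x: "0 \<le> x" "x < 1"
  shows "(SUP m. approx m (drearr Z) x) = drearr Z x"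
proof (rule antisym)
  show "(SUP m. approx m (drearr Z) x) \<le> drearr Z x"
  proof (rule SUP_least)
    fix m
    have "drearr Z (rr m x) \<le> drearr Z x" using rr_gt[OF x(1), of m] by (intro drearr_antimono) simp
    then show "approx m (drearr Z) x \<le> drearr Z x" using x by (simp add: approx_val min.coboundedI2)
  qed
next
  show "drearr Z x \<le> (SUP m. approx m (drearr Z) x)"
  proof (rule ccontr)
    assume "\<not> ?thesis"
    then have lt: "(SUP m. approx m (drearr Z) x) < drearr Z x" by simp
    define l where "l = (SUP m. approx m (drearr Z) x)"
    have xl: "ennreal x < Dist Z l" using lt drearr_gt[OF Z] unfolding l_def by simp
    have "Dist Z l \<noteq> top" using Dist_le1[of Z l] by (metis ennreal_one_less_top leD)
    then obtain t where t0: "Dist Z l = ennreal t" "0 \<le> t" by (cases "Dist Z l") auto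
    have "ennreal x < ennreal t" using xl t0(1) by simp
    then have "x < t" using x(1) ennreal_less_iff by blast
    note t = t0(1) this
    have "l < drearr Z x" using lt unfolding l_def .
    then have "l < top" using less_le_trans top_greatest by blast
    then obtain n1 :: nat where n1: "l < of_nat n1" using ennreal_Ex_less_of_nat by blast
    obtain n2 :: nat where n2: "1 / (t - x) < 2 ^ n2" using real_arch_pow[of 2 "1 / (t - x)"] by auto
    define m where "m = max n1 n2"
    have "(2::real) ^ n2 \<le> 2 ^ m" unfolding m_def by (intro power_increasing) auto
    with n2 have "1 / (t - x) < 2 ^ m" by linarith
    then have "1 / 2 ^ m < t - x" using t(2) by (simp add: field_simps)
    then have "rr m x < t" using rr_le[OF x(1), of m] by linarith
    then have "ennreal (rr m x) < Dist Z l" using t rr_gt[OF x(1), of m] x by (simp add: ennreal_less_iff)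
    then have a: "l < drearr Z (rr m x)" using drearr_gt[OF Z] by simp
    have "of_nat n1 \<le> (of_nat m :: ennreal)" unfolding m_def by simp
    then have b: "l < of_nat m" using n1 by (rule less_le_trans[rotated])
    have "l < approx m (drearr Z) x" using a b x by (simp add: approx_val)
    also have "\<dots> \<le> l" unfolding l_def by (rule SUP_upper) simp
    finally show False by simp
  qed
qed

lemma approx_le_drearr:
  assumes Z: "Z \<in> Mplus" and x: "0 \<le> x" "x < 1"
  shows "approx m (drearr Z) x \<le> drearr Z x"
  using approx_sup[OF Z x] by (metis SUP_upper UNIV_I)

lemma AVG:
  assumes N: "0 < N" and K: "0 < K" and c: "\<And>i. 0 \<le> c i" and q: "q < N"
  shows "(\<integral>\<^sup>+ x. step (N * K) c x * indicator (I N q) x \<partial>Omega) = ennreal ((\<Sum>r<K. c (q * K + r)) / (N * K))"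
proof -
  have NK: "0 < N * K" using N K by simp
  have ind: "indicator (I N q) x * indicator (I (N * K) i) x = (if i div K = q then indicator (I (N * K) i) x else 0 :: ennreal)"
    for x i
  proof (cases "x \<in> I (N * K) i")
    case True
    then have "x \<in> I N (i div K)" by (rule I_coarse[OF N K])
    then show ?thesis using True I_disj[OF N, of x "i div K" q] by (auto simp: indicator_def)
  qed simp
  have "(\<integral>\<^sup>+ x. step (N * K) c x * indicator (I N q) x \<partial>Omega)
      = (\<Sum>i<N * K. ennreal (c i) * (\<integral>\<^sup>+ x. indicator (I N q) x * indicator (I (N * K) i) x \<partial>Omega))"
    using q I_sets[OF q] by (intro integral_step_mult borel_measurable_indicator)
  also have "\<dots> = (\<Sum>i<N * K. if i div K = q then ennreal (c i) * ennreal (1 / (N * K)) else 0)"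
    unfolding ind by (intro sum.cong refl) (auto simp: I_sets emeasure_I)
  also have "\<dots> = (\<Sum>i\<in>{i. i < N * K \<and> i div K = q}. ennreal (c i) * ennreal (1 / (N * K)))"
    by (rule sum.mono_neutral_cong_right) auto
  also have "{i. i < N * K \<and> i div K = q} = (\<lambda>r. q * K + r) ` {..<K}"
  proof
    show "{i. i < N * K \<and> i div K = q} \<subseteq> (\<lambda>r. q * K + r) ` {..<K}"
    proof
      fix i assume "i \<in> {i. i < N * K \<and> i div K = q}"
      then have "i = q * K + i mod K" "i mod K < K" using K by (auto simp: div_mult_mod_eq[symmetric])
      then show "i \<in> (\<lambda>r. q * K + r) ` {..<K}" by blast
    qed
    show "(\<lambda>r. q * K + r) ` {..<K} \<subseteq> {i. i < N * K \<and> i div K = q}"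
    proof
      fix i assume "i \<in> (\<lambda>r. q * K + r) ` {..<K}"
      then obtain r where r: "r < K" "i = q * K + r" by auto
      have "q * K + K \<le> N * K" using q by (metis Suc_leI add.commute mult_Suc mult_le_mono1)
      then show "i \<in> {i. i < N * K \<and> i div K = q}" using r K by auto
    qed
  qed
  also have "(\<Sum>i\<in>(\<lambda>r. q * K + r) ` {..<K}. ennreal (c i) * ennreal (1 / (N * K)))
      = (\<Sum>r<K. ennreal (c (q * K + r)) * ennreal (1 / (N * K)))"
    by (subst sum.reindex) (auto simp: inj_on_def)
  also have "\<dots> = (\<Sum>r<K. ennreal (c (q * K + r) * (1 / (N * K))))"
    by (intro sum.cong refl) (rule ennreal_mult'[symmetric], simp add: c)
  also have "\<dots> = ennreal (\<Sum>r<K. c (q * K + r) * (1 / (N * K)))"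
    using c by (intro sum_ennreal) simp
  also have "(\<Sum>r<K. c (q * K + r) * (1 / (N * K))) = (\<Sum>r<K. c (q * K + r)) / (N * K)"
    by (simp add: sum_divide_distrib)
  finally show ?thesis .
qed


lemma SUP_shift_inc:
  fixes g :: "nat \<Rightarrow> ennreal"
  assumes inc: "incseq g"
  shows "(SUP j. g (n + j)) = (SUP m. g m)"
proof (rule antisym)
  show "(SUP j. g (n + j)) \<le> (SUP m. g m)" by (rule SUP_least) (rule SUP_upper, simp)
  show "(SUP m. g m) \<le> (SUP j. g (n + j))"
  proof (rule SUP_least)
    fix m
    have "g m \<le> g (n + m)" using inc by (simp add: incseq_def)
    also have "\<dots> \<le> (SUP j. g (n + j))" by (rule SUP_upper) simp
    finally show "g m \<le> (SUP j. g (n + j))" .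
  qed
qed

lemma approx_incseq:
  assumes Z: "Z \<in> Mplus"
  shows "incseq (\<lambda>m. approx m (drearr Z) x)"
  by (rule incseq_SucI) (rule approx_inc, rule drearr_antimono)

context rinorm begin

lemma CL:
  assumes Z: "Z \<in> Mplus"
    and fin: "\<And>q. q < 2 ^ n \<Longrightarrow> (\<integral>\<^sup>+ x. drearr Z x * indicator (I (2 ^ n) q) x \<partial>Omega) < \<infinity>"
  shows "R (step (2 ^ n) (\<lambda>q. enn2real (ennreal (2 ^ n) * (\<integral>\<^sup>+ x. drearr Z x * indicator (I (2 ^ n) q) x \<partial>Omega)))) \<le> R Z"
proof -
  define N :: nat where "N = 2 ^ n"
  have N: "0 < N" unfolding N_def by simp
  define W where "W = drearr Z"
  have Wm: "W \<in> Mplus" unfolding W_def using Z by (rule drearr_meas)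
  define J where "J q = (\<integral>\<^sup>+ x. W x * indicator (I N q) x \<partial>Omega)" for q
  define Jj where "Jj j q = (\<integral>\<^sup>+ x. approx (n + j) W x * indicator (I N q) x \<partial>Omega)" for j q
  define \<beta> where "\<beta> q = enn2real (ennreal N * J q)" for q
  define \<beta>j where "\<beta>j j q = (\<Sum>r<2 ^ j. apc (n + j) W (q * 2 ^ j + r)) / 2 ^ j" for j q
  have apx: "approx (n + j) W = step (N * 2 ^ j) (apc (n + j) W)" for j
    unfolding approx_def N_def by (simp add: power_add)
  have apc_nn: "0 \<le> apc m W i" for m i unfolding apc_def by simp
  have bound: "R (step N (\<beta>j j)) \<le> R Z" for j
  proof -
    have "R (step N (\<beta>j j)) \<le> R (step (N * 2 ^ j) (apc (n + j) W))"
      unfolding \<beta>j_def using FCA[OF N, of "2 ^ j" "apc (n + j) W"] apc_nn by simp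
    also have "\<dots> = R (approx (n + j) W)" by (simp add: apx)
    also have "\<dots> \<le> R W"
      by (intro R_mono approx_meas Wm)
        (use AE_lt1 AE_space in \<open>eventually_elim, simp add: W_def approx_le_drearr[OF Z]\<close>)
    also have "\<dots> = R Z" unfolding W_def by (rule R_drearr[OF Z])
    finally show ?thesis .
  qed
  have \<beta>j_eq: "ennreal (\<beta>j j q) = ennreal N * Jj j q" if q: "q < N" for j q
  proof -
    let ?S = "\<Sum>r<2 ^ j. apc (n + j) W (q * 2 ^ j + r)"
    have "Jj j q = ennreal ((\<Sum>r<2 ^ j. apc (n + j) W (q * 2 ^ j + r)) / (N * 2 ^ j))"
      unfolding Jj_def apx using AVG[OF N, of "2 ^ j" "apc (n + j) W" q] apc_nn q by simp
    then have J: "Jj j q = ennreal (?S / (N * 2 ^ j))" by simp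
    have "ennreal (\<beta>j j q) = ennreal (real N * (?S / (N * 2 ^ j)))"
      unfolding \<beta>j_def using N by (intro arg_cong[where f=ennreal]) (simp add: field_simps)
    also have "\<dots> = ennreal (real N) * ennreal (?S / (N * 2 ^ j))" by (rule ennreal_mult') simp
    also have "\<dots> = ennreal N * Jj j q" using J by (simp add: ennreal_of_nat_eq_real_of_nat)
    finally show ?thesis .
  qed
  have Jj_inc: "incseq (\<lambda>j. Jj j q)" for q
  proof (rule incseq_SucI)
    fix j
    have "approx (n + j) W x \<le> approx (n + Suc j) W x" for x
      unfolding W_def using incseq_SucD[OF approx_incseq[OF Z, of x], of "n + j"] by simp
    then show "Jj j q \<le> Jj (Suc j) q" unfolding Jj_def
      by (intro nn_integral_mono mult_right_mono) auto
  qed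
  have Jj_sup: "(SUP j. Jj j q) = J q" if q: "q < N" for q
  proof -
    have inc: "incseq (\<lambda>j x. approx (n + j) W x * indicator (I N q) x)"
    proof (rule incseq_SucI, rule le_funI)
      fix j x
      have "approx (n + j) W x \<le> approx (n + Suc j) W x"
        unfolding W_def using incseq_SucD[OF approx_incseq[OF Z, of x], of "n + j"] by simp
      then show "approx (n + j) W x * indicator (I N q) x \<le> approx (n + Suc j) W x * indicator (I N q) x"
        by (rule mult_right_mono) simp
    qed
    have meas: "(\<lambda>x. approx (n + j) W x * indicator (I N q) x) \<in> borel_measurable Omega" for j
      using approx_meas[of "n + j" W] I_sets[OF q] unfolding Mplus_def by simp
    have pt: "(SUP j. approx (n + j) W x * indicator (I N q) x) = W x * indicator (I N q) x" for x
    proof (cases "x \<in> I N q")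
      case True
      then have x: "0 \<le> x" "x < 1" using I_sub[OF q] by auto
      have "(SUP j. approx (n + j) W x) = (SUP m. approx m W x)"
        unfolding W_def by (rule SUP_shift_inc[OF approx_incseq[OF Z]])
      also have "\<dots> = W x" unfolding W_def by (rule approx_sup[OF Z x])
      finally show ?thesis using True by simp
    qed simp
    have "(\<integral>\<^sup>+ x. (SUP j. approx (n + j) W x * indicator (I N q) x) \<partial>Omega) = (SUP j. Jj j q)"
      unfolding Jj_def using nn_integral_monotone_convergence_SUP[OF inc meas] by simp
    then show ?thesis unfolding pt J_def by simp
  qed
  have step_sup: "incseq (\<lambda>j. step N (\<beta>j j) x) \<and> (\<lambda>j. step N (\<beta>j j) x) \<longlonglongrightarrow> step N \<beta> x" for x
  proof (cases "0 \<le> x \<and> x < 1")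
    case False then show ?thesis by (simp add: step_out)
  next
    case True
    define q where "q = nat \<lfloor>x * real N\<rfloor>"
    have q: "q < N" "x \<in> I N q" using I_cover[OF N] True unfolding q_def by auto
    have sj: "step N (\<beta>j j) x = ennreal N * Jj j q" for j using step_val[OF N q] \<beta>j_eq[OF q(1)] by simp
    have Jfin: "J q < \<infinity>" using fin q(1) unfolding J_def W_def N_def by simp
    have s: "step N \<beta> x = ennreal N * J q"
      using step_val[OF N q] unfolding \<beta>_def using Jfin
      by (simp add: ennreal_enn2real ennreal_mult_less_top of_nat_less_top)
    have inc: "incseq (\<lambda>j. step N (\<beta>j j) x)"
      unfolding sj using Jj_inc[of q] by (auto simp: incseq_def intro: mult_left_mono)
    have "(SUP j. step N (\<beta>j j) x) = step N \<beta> x"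
      unfolding sj s using Jj_sup[OF q(1)] by (simp add: SUP_mult_left_ennreal[symmetric])
    then show ?thesis using inc LIMSEQ_SUP[OF inc] by simp
  qed
  have "incseq (\<lambda>j. R (step N (\<beta>j j))) \<and> (\<lambda>j. R (step N (\<beta>j j))) \<longlonglongrightarrow> R (step N \<beta>)"
    by (rule R_fatou[OF step_meas step_meas]) (use step_sup in auto)
  then have "R (step N \<beta>) \<le> R Z" using bound by (auto intro: LIMSEQ_le_const2)
  then show ?thesis unfolding \<beta>_def J_def W_def N_def by simp
qed

end


lemma swap_sum:
  fixes u v :: "nat \<Rightarrow> real"
  assumes ij: "i < N" "j < N" "i \<noteq> j"
  shows "(\<Sum>k<N. u (Transposition.transpose i j k) * v k) = (\<Sum>k<N. u k * v k) + (u j - u i) * (v i - v j)"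
proof -
  have "(\<Sum>k<N. u (Transposition.transpose i j k) * v k) - (\<Sum>k<N. u k * v k) = (\<Sum>k<N. u (Transposition.transpose i j k) * v k - u k * v k)"
    by (simp add: sum_subtractf)
  also have "\<dots> = (\<Sum>k\<in>{i, j}. u (Transposition.transpose i j k) * v k - u k * v k)"
    by (rule sum.mono_neutral_right) (use ij in \<open>auto simp: Transposition.transpose_def\<close>)
  also have "\<dots> = (u j - u i) * (v i - v j)" using ij by (simp add: Transposition.transpose_def algebra_simps)
  finally show ?thesis by simp
qed

lemma sorted_perm:
  fixes gp a :: "nat \<Rightarrow> real"
  assumes adec: "\<And>i j. i \<le> j \<Longrightarrow> j < N \<Longrightarrow> a j \<le> a i"
  shows "\<exists>s. s permutes {..<N} \<and> (\<Sum>k<N. gp k * a k) \<le> (\<Sum>k<N. gp (s k) * a k)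
             \<and> (\<forall>i j. i \<le> j \<longrightarrow> j < N \<longrightarrow> gp (s j) \<le> gp (s i))"
proof -
  define P where "P = {s. s permutes {..<N}}"
  define f1 where "f1 s = (\<Sum>k<N. gp (s k) * a k)" for s :: "nat \<Rightarrow> nat"
  define f2 where "f2 s = (\<Sum>k<N. gp (s k) * (real N - real k))" for s :: "nat \<Rightarrow> nat"
  have finP: "finite P" unfolding P_def by (rule finite_permutations) simp
  have idP: "id \<in> P" unfolding P_def by simp
  define m1 where "m1 = Max (f1 ` P)"
  have m1_ge: "f1 s \<le> m1" if "s \<in> P" for s unfolding m1_def using finP that by simp
  have "m1 \<in> f1 ` P" unfolding m1_def using finP idP by (intro Max_in) auto
  then obtain s0 where s0: "s0 \<in> P" "f1 s0 = m1" by auto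
  define P1 where "P1 = {s \<in> P. f1 s = m1}"
  have finP1: "finite P1" unfolding P1_def using finP by simp
  have s0P1: "s0 \<in> P1" unfolding P1_def using s0 by simp
  define m2 where "m2 = Max (f2 ` P1)"
  have m2_ge: "f2 s \<le> m2" if "s \<in> P1" for s unfolding m2_def using finP1 that by simp
  have "m2 \<in> f2 ` P1" unfolding m2_def using finP1 s0P1 by (intro Max_in) auto
  then obtain s where s: "s \<in> P1" "f2 s = m2" by auto
  have sP: "s permutes {..<N}" and sm1: "f1 s = m1" using s(1) unfolding P1_def P_def by auto
  have dec: "gp (s j) \<le> gp (s i)" if ij: "i \<le> j" "j < N" for i j
  proof (rule ccontr)
    assume "\<not> gp (s j) \<le> gp (s i)"
    then have lt: "gp (s i) < gp (s j)" by simp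
    then have ne: "i \<noteq> j" by auto
    have iN: "i < N" using ij by simp
    define t where "t = s \<circ> Transposition.transpose i j"
    have tP: "t permutes {..<N}" unfolding t_def
      by (rule permutes_compose[OF permutes_swap_id sP]) (use iN ij in auto)
    have f1t: "f1 t = f1 s + (gp (s j) - gp (s i)) * (a i - a j)"
      unfolding f1_def t_def using swap_sum[OF iN ij(2) ne, of "\<lambda>k. gp (s k)" a] by simp
    have f2t: "f2 t = f2 s + (gp (s j) - gp (s i)) * ((real N - real i) - (real N - real j))"
      unfolding f2_def t_def using swap_sum[OF iN ij(2) ne, of "\<lambda>k. gp (s k)" "\<lambda>k. real N - real k"] by simp
    have "0 \<le> (gp (s j) - gp (s i)) * (a i - a j)" using lt adec[OF ij] by simp
    then have "m1 \<le> f1 t" using f1t sm1 by simp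
    moreover have "f1 t \<le> m1" using m1_ge tP unfolding P_def by simp
    ultimately have "t \<in> P1" using tP unfolding P1_def P_def by simp
    then have "f2 t \<le> m2" by (rule m2_ge)
    moreover have "0 < (gp (s j) - gp (s i)) * ((real N - real i) - (real N - real j))"
      using lt ij ne by simp
    ultimately show False using f2t s(2) by simp
  qed
  have "(\<Sum>k<N. gp k * a k) = f1 id" unfolding f1_def by simp
  also have "\<dots> \<le> f1 s" using m1_ge[OF idP] sm1 by simp
  finally show ?thesis using sP dec unfolding f1_def by blast
qed


lemma int_step_ind:
  assumes N: "0 < N" and k: "k < N"
  shows "(\<integral>\<^sup>+ x. step N c x * indicator (I N k) x \<partial>Omega) = ennreal (c k) * ennreal (1 / N)"
proof -
  have "(\<integral>\<^sup>+ x. step N c x * indicator (I N k) x \<partial>Omega) = (\<integral>\<^sup>+ x. ennreal (c k) * indicator (I N k) x \<partial>Omega)"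
    by (rule nn_integral_cong) (auto simp: indicator_def step_val[OF N k])
  also have "\<dots> = ennreal (c k) * ennreal (1 / N)"
    by (subst nn_integral_cmult_indicator[OF I_sets[OF k]]) (simp add: emeasure_I[OF k])
  finally show ?thesis .
qed

context rinorm begin

lemma R_int_bound: "\<exists>C. \<forall>X\<in>Mplus. (\<integral>\<^sup>+ x. X x \<partial>Omega) \<le> ennreal C * R X"
proof -
  have "\<forall>E\<in>sets Omega. R (indicator E) < \<infinity> \<and>
        (\<exists>cE::real. \<forall>X\<in>Mplus. (\<integral>\<^sup>+ \<omega>\<in>E. X \<omega> \<partial>Omega) \<le> ennreal cE * R X)"
    using bfn[unfolded banach_function_norm_def] by (elim conjE) assumption
  then have "\<exists>cE::real. \<forall>X\<in>Mplus. (\<integral>\<^sup>+ \<omega>\<in>space Omega. X \<omega> \<partial>Omega) \<le> ennreal cE * R X"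
    by (meson sets.top)
  then obtain C where C: "\<forall>X\<in>Mplus. (\<integral>\<^sup>+ \<omega>\<in>space Omega. X \<omega> \<partial>Omega) \<le> ennreal C * R X"
    by blast
  have "(\<integral>\<^sup>+ \<omega>\<in>space Omega. X \<omega> \<partial>Omega) = (\<integral>\<^sup>+ x. X x \<partial>Omega)" for X
    by (rule nn_integral_cong) simp
  then show ?thesis using C by auto
qed

lemma step_add_const_ae:
  assumes N: "0 < N" and c: "\<And>k. k < N \<Longrightarrow> 0 \<le> c k" and t: "0 \<le> t"
  shows "AE x in Omega. step N (\<lambda>k. c k + t) x = step N c x + ennreal t"
  using AE_lt1 AE_space
proof eventually_elim
  case (elim x)
  then have x: "0 \<le> x" "x < 1" by auto
  have k: "nat \<lfloor>x * real N\<rfloor> < N" using I_cover[OF N x] by simp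
  show ?case using step_at[OF N x] k c t by (simp add: ennreal_plus)
qed

lemma R_step_add:
  assumes pte: "pos_transl_equivariant R"
    and N: "0 < N" and c: "\<And>k. k < N \<Longrightarrow> 0 \<le> c k" and t: "0 \<le> t"
  shows "R (step N (\<lambda>k. c k + t)) = R (step N c) + ennreal t"
proof -
  have "R (step N (\<lambda>k. c k + t)) = R (\<lambda>x. step N c x + ennreal t)"
    by (rule R_cong[OF step_meas Mplus_add_const[OF step_meas] step_add_const_ae[OF N c t]]) auto
  also have "\<dots> = R (step N c) + ennreal t"
    using pte step_meas t unfolding pos_transl_equivariant_def by blast
  finally show ?thesis .
qed

lemma pR_add:
  assumes pte: "pos_transl_equivariant R"
    and N: "0 < N" and c: "\<And>k. k < N \<Longrightarrow> 0 \<le> c k" and t: "0 \<le> t"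
  shows "pR N (\<lambda>k. c k + t) = pR N c + t"
proof -
  have "ennreal (pR N (\<lambda>k. c k + t)) = ennreal (pR N c) + ennreal t"
    using R_step_add[OF pte N c t] by (simp add: R_step_eq[OF N])
  also have "\<dots> = ennreal (pR N c + t)" by (rule ennreal_plus[symmetric]) (simp_all add: pR_nonneg t)
  finally have eq: "ennreal (pR N (\<lambda>k. c k + t)) = ennreal (pR N c + t)" .
  have nn: "0 \<le> pR N (\<lambda>k. c k + t)" "0 \<le> pR N c + t" using t pR_nonneg[of N c] pR_nonneg[of N "\<lambda>k. c k + t"] by auto
  show ?thesis using ennreal_inj[OF nn] eq by blast
qed

lemma MFL:
  assumes pte: "pos_transl_equivariant R"
    and a1: "\<And>k. k < 2 ^ n \<Longrightarrow> 1 \<le> a k"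
    and adec: "\<And>i j. i \<le> j \<Longrightarrow> j < 2 ^ n \<Longrightarrow> a j \<le> a i"
  shows "\<exists>Y\<in>YS R. R (step (2 ^ n) a) \<le> (\<integral>\<^sup>+ x. step (2 ^ n) a x * drearr Y x \<partial>Omega)"
proof -
  define N :: nat where "N = 2 ^ n"
  have N: "0 < N" unfolding N_def by simp
  have a1': "\<And>k. k < N \<Longrightarrow> 1 \<le> a k" and adec': "\<And>i j. i \<le> j \<Longrightarrow> j < N \<Longrightarrow> a j \<le> a i"
    using a1 adec unfolding N_def by auto
  have a0: "\<And>k. k < N \<Longrightarrow> 0 \<le> a k" using a1' by (meson order_trans zero_le_one)
  define a' where "a' k = (if k < N then a k else 0)" for k
  obtain g where g1: "\<And>x. (\<forall>k\<ge>N. x k = 0) \<Longrightarrow> (\<Sum>k<N. g k * x k) \<le> pR N x"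
    and g2: "(\<Sum>k<N. g k * a' k) = pR N a'"
    using hb_support[of "pR N" N a', OF pR_sub[OF N] pR_hom[OF N]] unfolding a'_def by auto
  have g: "(\<Sum>k<N. g k * x k) \<le> pR N x" for x
  proof -
    define x' where "x' k = (if k < N then x k else 0)" for k
    have "(\<Sum>k<N. g k * x k) = (\<Sum>k<N. g k * x' k)" unfolding x'_def by (rule sum.cong) auto
    also have "\<dots> \<le> pR N x'" by (rule g1) (simp add: x'_def)
    also have "pR N x' = pR N x" unfolding x'_def by (rule pR_cong) simp
    finally show ?thesis .
  qed
  have ga: "(\<Sum>k<N. g k * a k) = pR N a"
  proof -
    have "(\<Sum>k<N. g k * a k) = (\<Sum>k<N. g k * a' k)" unfolding a'_def by (rule sum.cong) auto
    also have "\<dots> = pR N a'" by (rule g2)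
    also have "pR N a' = pR N a" unfolding a'_def by (rule pR_cong) simp
    finally show ?thesis .
  qed
  define gp where "gp k = max (g k) 0" for k
  have gp_nn: "0 \<le> gp k" for k unfolding gp_def by simp
  have gp_le: "(\<Sum>k<N. gp k * c k) \<le> pR N c" if c: "\<And>k. k < N \<Longrightarrow> 0 \<le> c k" for c
  proof -
    define c' where "c' k = (if 0 < g k then c k else 0)" for k
    have "(\<Sum>k<N. gp k * c k) = (\<Sum>k<N. g k * c' k)"
      unfolding gp_def c'_def by (rule sum.cong) auto
    also have "\<dots> \<le> pR N c'" by (rule g)
    also have "\<dots> \<le> pR N c" using c unfolding c'_def by (intro pR_mono[OF N]) auto
    finally show ?thesis .
  qed
  have gp_a: "pR N a \<le> (\<Sum>k<N. gp k * a k)"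
    unfolding ga[symmetric] gp_def using a0 by (intro sum_mono mult_right_mono) auto
  obtain s where sP: "s permutes {..<N}" and sa: "(\<Sum>k<N. gp k * a k) \<le> (\<Sum>k<N. gp (s k) * a k)"
    and sdec: "\<And>i j. i \<le> j \<Longrightarrow> j < N \<Longrightarrow> gp (s j) \<le> gp (s i)"
    using sorted_perm[of N a gp] adec' by blast
  define h where "h k = gp (s k)" for k
  have h_nn: "0 \<le> h k" for k unfolding h_def by (rule gp_nn)
  have hdec: "\<And>i j. i \<le> j \<Longrightarrow> j < N \<Longrightarrow> h j \<le> h i" unfolding h_def by (rule sdec)
  have h_le: "(\<Sum>k<N. h k * c k) \<le> pR N c" if c: "\<And>k. k < N \<Longrightarrow> 0 \<le> c k" for c
  proof -
    have bij: "bij_betw s {..<N} {..<N}" using permutes_imp_bij[OF sP] .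
    have ibij: "bij_betw (inv s) {..<N} {..<N}" using permutes_imp_bij[OF permutes_inv[OF sP]] .
    have "(\<Sum>k<N. h k * c k) = (\<Sum>k<N. (\<lambda>k. gp k * c (inv s k)) (s k))"
      unfolding h_def by (rule sum.cong) (auto simp: permutes_inverses[OF sP])
    also have "\<dots> = (\<Sum>k<N. gp k * c (inv s k))" by (rule sum.reindex_bij_betw[OF bij])
    also have "\<dots> \<le> pR N (\<lambda>k. c (inv s k))"
    proof (rule gp_le)
      fix k assume "k < N"
      then have "inv s k < N" using permutes_in_image[OF permutes_inv[OF sP]] by simp
      then show "0 \<le> c (inv s k)" by (rule c)
    qed
    also have "\<dots> = pR N c" by (rule pR_perm[OF N ibij])
    finally show ?thesis .
  qed
  have h_a: "(\<Sum>k<N. h k * a k) = pR N a"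
  proof -
    have "(\<Sum>k<N. h k * a k) \<le> pR N a" by (rule h_le) (rule a0)
    then show ?thesis using gp_a sa unfolding h_def by linarith
  qed
  have sum_h: "(\<Sum>k<N. h k) = 1"
  proof (rule antisym)
    have "(\<Sum>k<N. h k * (a k + 1)) \<le> pR N (\<lambda>k. a k + 1)" using a0 by (intro h_le) auto
    also have "\<dots> = pR N a + 1" by (rule pR_add[OF pte N]) (simp_all add: a0)
    finally have "(\<Sum>k<N. h k * a k) + (\<Sum>k<N. h k) \<le> pR N a + 1"
      by (simp add: distrib_left sum.distrib)
    then show "(\<Sum>k<N. h k) \<le> 1" using h_a by simp
  next
    have c: "\<And>k. k < N \<Longrightarrow> 0 \<le> a k - 1" using a1' by simp
    have "(\<Sum>k<N. h k * (a k - 1)) \<le> pR N (\<lambda>k. a k - 1)" using c by (intro h_le) auto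
    moreover have "pR N (\<lambda>k. (a k - 1) + 1) = pR N (\<lambda>k. a k - 1) + 1" using pR_add[OF pte N c zero_le_one] .
    moreover have "pR N (\<lambda>k. (a k - 1) + 1) = pR N a" by simp
    ultimately have "(\<Sum>k<N. h k * a k) - (\<Sum>k<N. h k) \<le> pR N a - 1"
      by (simp add: right_diff_distrib sum_subtractf)
    then show "1 \<le> (\<Sum>k<N. h k)" using h_a by simp
  qed
  define Y where "Y = step N (\<lambda>k. real N * h k)"
  have Ym: "Y \<in> Mplus" unfolding Y_def by (rule step_meas)
  have NN: "ennreal (real N) * ennreal (1 / real N) = 1" using N
    by (simp add: ennreal_mult[symmetric] del: ennreal_mult)
  have intY: "(\<integral>\<^sup>+ x. Y x \<partial>Omega) = 1"
  proof -
    have "(\<integral>\<^sup>+ x. Y x \<partial>Omega) = (\<Sum>k<N. ennreal (real N * h k)) * ennreal (1 / N)"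
      unfolding Y_def by (rule integral_step[OF N])
    also have "\<dots> = ennreal (real N * (\<Sum>k<N. h k) * (1 / N))"
      using h_nn by (simp add: sum_ennreal sum_distrib_left[symmetric] ennreal_mult[symmetric] sum_nonneg del: ennreal_mult)
    also have "\<dots> = 1" using N sum_h by simp
    finally show ?thesis .
  qed
  have dY: "AE x in Omega. drearr Y x = Y x"
    using AE_lt1 AE_space
  proof eventually_elim
    case (elim x)
    show ?case unfolding Y_def
      by (rule drearr_step_decr[OF N]) (use elim hdec in \<open>auto intro: mult_left_mono\<close>)
  qed
  have Yind: "(\<integral>\<^sup>+ x. Y x * indicator (I N k) x \<partial>Omega) = ennreal (h k)" if k: "k < N" for k
  proof -
    have "(\<integral>\<^sup>+ x. Y x * indicator (I N k) x \<partial>Omega) = ennreal (real N * h k) * ennreal (1 / N)"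
      unfolding Y_def by (rule int_step_ind[OF N k])
    also have "\<dots> = ennreal (h k)"
      using N h_nn[of k] by (simp add: ennreal_mult[symmetric] del: ennreal_mult)
    finally show ?thesis .
  qed
  have main: "R (step N a) \<le> (\<integral>\<^sup>+ x. step N a x * drearr Y x \<partial>Omega)"
  proof -
    have "(\<integral>\<^sup>+ x. step N a x * drearr Y x \<partial>Omega) = (\<integral>\<^sup>+ x. step N a x * Y x \<partial>Omega)"
      by (rule nn_integral_cong_AE) (use dY in \<open>eventually_elim, simp\<close>)
    also have "\<dots> = (\<Sum>k<N. ennreal (a k) * (\<integral>\<^sup>+ x. Y x * indicator (I N k) x \<partial>Omega))"
      using Ym unfolding Mplus_def by (rule integral_step_mult)
    also have "\<dots> = (\<Sum>k<N. ennreal (a k * h k))"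
      by (rule sum.cong) (auto simp: Yind a0 ennreal_mult')
    also have "\<dots> = ennreal (\<Sum>k<N. a k * h k)"
      using a0 h_nn by (intro sum_ennreal) auto
    also have "(\<Sum>k<N. a k * h k) = pR N a" using h_a by (simp add: mult.commute)
    finally show ?thesis by (simp add: R_step_eq[OF N])
  qed
  have assocY: "assoc_norm R Y = 1"
  proof (rule antisym)
    show "1 \<le> assoc_norm R Y" using assoc_ge_int[OF Ym] intY by simp
  next
    obtain C where C: "\<And>X. X \<in> Mplus \<Longrightarrow> (\<integral>\<^sup>+ x. X x \<partial>Omega) \<le> ennreal C * R X"
      using R_int_bound by blast
    show "assoc_norm R Y \<le> 1"
      unfolding assoc_norm_def
    proof (rule SUP_least)
      fix Z assume "Z \<in> {Y \<in> Mplus. R Y \<le> 1}"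
      then have Z: "Z \<in> Mplus" and RZ: "R Z \<le> 1" by auto
      have dZm: "drearr Z \<in> borel_measurable Omega" using drearr_meas[OF Z] by (simp add: Mplus_def)
      define J where "J k = (\<integral>\<^sup>+ x. drearr Z x * indicator (I N k) x \<partial>Omega)" for k
      have Jfin: "J k < \<infinity>" for k
      proof -
        have "J k \<le> (\<integral>\<^sup>+ x. drearr Z x \<partial>Omega)" unfolding J_def
          by (intro nn_integral_mono) (simp add: indicator_def)
        also have "\<dots> = (\<integral>\<^sup>+ x. Z x \<partial>Omega)" by (rule integral_drearr[OF Z])
        also have "\<dots> \<le> ennreal C * R Z" by (rule C[OF Z])
        also have "\<dots> \<le> ennreal C * 1" by (intro mult_left_mono RZ) simp
        finally show ?thesis by (simp add: le_less_trans)
      qed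
      define \<beta> where "\<beta> k = enn2real (ennreal (2 ^ n) * J k)" for k
      have \<beta>_eq: "ennreal (\<beta> k) = ennreal (real N) * J k" for k
        unfolding \<beta>_def N_def using Jfin[of k]
        by (subst ennreal_enn2real) (auto simp: ennreal_mult_less_top)
      have \<beta>_nn: "0 \<le> \<beta> k" for k unfolding \<beta>_def by simp
      have "(\<integral>\<^sup>+ w. drearr Y w * drearr Z w \<partial>Omega) = (\<integral>\<^sup>+ w. Y w * drearr Z w \<partial>Omega)"
        by (rule nn_integral_cong_AE) (use dY in \<open>eventually_elim, simp\<close>)
      also have "\<dots> = (\<Sum>k<N. ennreal (real N * h k) * J k)"
        unfolding Y_def J_def using dZm by (rule integral_step_mult)
      also have "\<dots> = (\<Sum>k<N. ennreal (h k * \<beta> k))"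
      proof (rule sum.cong[OF refl])
        fix k
        have e1: "ennreal (h k * \<beta> k) = ennreal (h k) * (ennreal (real N) * J k)"
          by (subst ennreal_mult') (simp_all add: h_nn \<beta>_eq)
        have e2: "ennreal (real N * h k) = ennreal (real N) * ennreal (h k)"
          by (subst ennreal_mult') simp_all
        show "ennreal (real N * h k) * J k = ennreal (h k * \<beta> k)"
          unfolding e1 e2 by (simp only: mult_ac)
      qed
      also have "\<dots> = ennreal (\<Sum>k<N. h k * \<beta> k)"
        using h_nn \<beta>_nn by (intro sum_ennreal) auto
      also have "\<dots> \<le> ennreal (pR N \<beta>)" using h_le[of \<beta>] \<beta>_nn by (intro ennreal_leI) auto
      also have "\<dots> = R (step N \<beta>)" by (simp add: R_step_eq[OF N])
      also have "\<dots> \<le> R Z" unfolding \<beta>_def J_def N_def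
        by (rule CL[OF Z]) (use Jfin in \<open>simp add: J_def N_def\<close>)
      also have "\<dots> \<le> 1" by (rule RZ)
      finally show "(\<integral>\<^sup>+ w. drearr Y w * drearr Z w \<partial>Omega) \<le> 1" .
    qed
  qed
  have "Y \<in> YS R" unfolding YS_def expect_def using Ym intY assocY by simp
  then show ?thesis using main unfolding N_def by blast
qed

end


context rinorm begin

lemma pte_imp_rep:
  assumes pte: "pos_transl_equivariant R" and X: "X \<in> Mplus"
  shows "R X = (SUP Y\<in>YS R. \<integral>\<^sup>+ \<omega>. drearr X \<omega> * drearr Y \<omega> \<partial>Omega)"
proof (rule antisym)
  define S where "S = (SUP Y\<in>YS R. \<integral>\<^sup>+ \<omega>. drearr X \<omega> * drearr Y \<omega> \<partial>Omega)"
  define W where "W = drearr X"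
  have Wm: "W \<in> Mplus" unfolding W_def using X by (rule drearr_meas)
  have bnd: "R (approx n W) \<le> S" for n
  proof -
    define c where "c = apc n W"
    define a where "a k = c k + 1" for k
    have c0: "0 \<le> c k" for k unfolding c_def apc_def by simp
    have cdec: "c j \<le> c i" if "i \<le> j" for i j
    proof -
      have "W ((real j + 1) / 2 ^ n) \<le> W ((real i + 1) / 2 ^ n)"
        unfolding W_def using that by (intro drearr_antimono divide_right_mono) auto
      then have "min (of_nat n) (W ((real j + 1) / 2 ^ n)) \<le> min (of_nat n) (W ((real i + 1) / 2 ^ n))"
        by (rule min.mono[OF order_refl])
      then show ?thesis unfolding c_def apc_def
        by (rule enn2real_mono) (rule le_less_trans[OF min.cobounded1 of_nat_less_top])
    qed
    obtain Y where Y: "Y \<in> YS R" and RY: "R (step (2 ^ n) a) \<le> (\<integral>\<^sup>+ x. step (2 ^ n) a x * drearr Y x \<partial>Omega)"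
      using MFL[OF pte, of n a] c0 cdec unfolding a_def by auto
    have Ym: "Y \<in> Mplus" and EY: "expect Y = 1" using Y by (auto simp: YS_def)
    have dYm: "drearr Y \<in> borel_measurable Omega" using drearr_meas[OF Ym] by (simp add: Mplus_def)
    have apm: "approx n W \<in> borel_measurable Omega" using approx_meas[of n W] by (simp add: Mplus_def)
    have Ra: "R (step (2 ^ n) a) = R (approx n W) + 1"
      unfolding a_def approx_def c_def using R_step_add[OF pte, of "2 ^ n" "apc n W" 1] c0 c_def by simp
    have "(\<integral>\<^sup>+ x. step (2 ^ n) a x * drearr Y x \<partial>Omega) = (\<integral>\<^sup>+ x. approx n W x * drearr Y x + drearr Y x \<partial>Omega)"
    proof (rule nn_integral_cong_AE)
      have "AE x in Omega. step (2 ^ n) (\<lambda>k. c k + 1) x = step (2 ^ n) c x + ennreal 1"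
        by (rule step_add_const_ae) (simp_all add: c0)
      then show "AE x in Omega. step (2 ^ n) a x * drearr Y x = approx n W x * drearr Y x + drearr Y x"
        unfolding a_def approx_def c_def by eventually_elim (simp add: distrib_right)
    qed
    also have "\<dots> = (\<integral>\<^sup>+ x. approx n W x * drearr Y x \<partial>Omega) + (\<integral>\<^sup>+ x. drearr Y x \<partial>Omega)"
      using apm dYm by (intro nn_integral_add) auto
    also have "(\<integral>\<^sup>+ x. drearr Y x \<partial>Omega) = 1" using integral_drearr[OF Ym] EY by (simp add: expect_def)
    also have "(\<integral>\<^sup>+ x. approx n W x * drearr Y x \<partial>Omega) \<le> (\<integral>\<^sup>+ x. W x * drearr Y x \<partial>Omega)"
    proof (rule nn_integral_mono_AE)
      show "AE x in Omega. approx n W x * drearr Y x \<le> W x * drearr Y x"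
        using AE_lt1 AE_space
      proof eventually_elim
        case (elim x)
        then show ?case unfolding W_def using approx_le_drearr[OF X, of x n] by (auto intro: mult_right_mono)
      qed
    qed
    also have "(\<integral>\<^sup>+ x. W x * drearr Y x \<partial>Omega) \<le> S"
      unfolding S_def W_def using Y by (intro SUP_upper)
    finally have I: "(\<integral>\<^sup>+ x. step (2 ^ n) a x * drearr Y x \<partial>Omega) \<le> S + 1"
      by (simp add: add_right_mono)
    have "R (approx n W) + 1 \<le> S + 1" using RY I unfolding Ra by (rule order_trans)
    then show ?thesis using ennreal_add_left_cancel_le[of 1 "R (approx n W)" S] by (simp add: add.commute)
  qed
  have "incseq (\<lambda>n. R (approx n W)) \<and> (\<lambda>n. R (approx n W)) \<longlonglongrightarrow> R W"
  proof (rule R_fatou[OF approx_meas Wm])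
    show "AE x in Omega. incseq (\<lambda>n. approx n W x) \<and> (\<lambda>n. approx n W x) \<longlonglongrightarrow> W x"
      using AE_lt1 AE_space
    proof eventually_elim
      case (elim x)
      have inc: "incseq (\<lambda>n. approx n W x)" unfolding W_def by (rule approx_incseq[OF X])
      have "(SUP n. approx n W x) = W x" unfolding W_def using elim by (intro approx_sup[OF X]) auto
      then show ?case using inc LIMSEQ_SUP[OF inc] by simp
    qed
  qed
  then have "R W \<le> S" using bnd by (auto intro: LIMSEQ_le_const2)
  then show "R X \<le> S" unfolding W_def using R_drearr[OF X] by simp
next
  show "(SUP Y\<in>YS R. \<integral>\<^sup>+ \<omega>. drearr X \<omega> * drearr Y \<omega> \<partial>Omega) \<le> R X"
  proof (rule SUP_least)
    fix Y assume "Y \<in> YS R"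
    then show "(\<integral>\<^sup>+ \<omega>. drearr X \<omega> * drearr Y \<omega> \<partial>Omega) \<le> R X"
      by (intro holder X) (auto simp: YS_def)
  qed
qed

end

theorem theorem10:
  fixes R :: "(real \<Rightarrow> ennreal) \<Rightarrow> ennreal"
  assumes "ri_function_norm R"
  shows "(\<forall>X\<in>Mplus. R X = (SUP Y\<in>{Y\<in>Mplus. expect Y = 1 \<and> assoc_norm R Y = 1}.
              \<integral>\<^sup>+ \<omega>. drearr X \<omega> * drearr Y \<omega> \<partial>Omega))
         \<longleftrightarrow> pos_transl_equivariant R"
proof -
  interpret rinorm R by (rule rinorm.intro) (rule assms)
  have YS: "{Y\<in>Mplus. expect Y = 1 \<and> assoc_norm R Y = 1} = YS R" by (simp add: YS_def)
  show ?thesis unfolding YS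
    using rep_imp_pte pte_imp_rep by blast
qed


end
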